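(* Let $\phi:[0,\infty)\to\mathbb{R}$ and let $y_0\ge 0$ be a constant such that $\phi$ is square-integrable on $[0,y_0]$. Let $(\lambda_n)_{n\in\mathbb{N}}$ be a non-decreasing sequence of positive real numbers tending to infinity, let $(r_n)_{n\in\mathbb{N}}$ be a sequence of complex numbers, let $c\in\mathbb{R}$ and $X_0>0$. Assume that for all $y\ge y_0$ and all $X\ge X_0$, $$\phi(y)=c+\Re\Big(\sum_{\lambda_n\le X} r_n e^{i\lambda_n y}\Big)+\mathcal{E}(y,X),$$ where $\mathcal{E}(y,X)$ satisfies $\lim_{Y\to\infty}\frac{1}{Y}\int_{y_0}^{Y}|\mathcal{E}(y,e^Y)|^2\,dy=0.$ Assume either of the following: (a) $r_n\ll\lambda_n^{-\beta}$ for some $\beta>1/2$, and $\sum_{T<\lambda_n\le T+1}1\ll\log T$; (b) $0\le\theta<3-\sqrt3$, $\sum_{T<\lambda_n\le T+1}1\ll\log T$, and $\sum_{\lambda_n\le T}\lambda_n^2|r_n|^2\ll T^{\theta}$. Then $\phi$ is a $B^2$-almost periodic function and therefore possesses a limiting distribution.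
   Context: Notation: $f\ll g$ means there is $M>0$ with $|f|\le M|g|$ for all sufficiently large values of the variable. A real function $\phi$ on $[0,\infty)$ is $B^2$-almost periodic if for every $\epsilon>0$ there is a real-valued trigonometric polynomial $P(y)=\sum_{n=1}^{N}a_n e^{i\mu_n y}$ ($a_n\in\mathbb{C}$, $\mu_n\in\mathbb{R}$) with $\limsup_{Y\to\infty}\frac1Y\int_0^Y|\phi(y)-P(y)|^2dy<\epsilon^2$. A function $\phi:[0,\infty)\to\mathbb{R}$ has a limiting distribution $\mu$ if $\mu$ is a probability measure on $\mathbb{R}$ and $\lim_{Y\to\infty}\frac1Y\int_0^Y f(\phi(y))dy=\int f\,d\mu$ for every bounded continuous $f:\mathbb{R}\to\mathbb{R}$. *)

theory Defs
  imports "HOL-Probability.Probability"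
begin

definition trig_poly :: "nat \<Rightarrow> (nat \<Rightarrow> complex) \<Rightarrow> (nat \<Rightarrow> real) \<Rightarrow> real \<Rightarrow> complex" where
  "trig_poly N a mu y = (\<Sum>n=1..N. a n * exp (\<i> * complex_of_real (mu n * y)))"

definition B2_almost_periodic :: "(real \<Rightarrow> real) \<Rightarrow> bool" where
  "B2_almost_periodic \<phi> \<longleftrightarrow>
     (\<forall>\<epsilon>>0. \<exists>N a mu.
        (\<forall>y. Im (trig_poly N a mu y) = 0) \<and>
        Limsup at_top (\<lambda>Y::real. ennreal (1 / Y) *
           (\<integral>\<^sup>+ y\<in>{0..Y}. ennreal ((cmod (complex_of_real (\<phi> y) - trig_poly N a mu y))^2) \<partial>lborel))
          < ennreal (\<epsilon>^2))"

definition has_limiting_distribution :: "(real \<Rightarrow> real) \<Rightarrow> bool" where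
  "has_limiting_distribution \<phi> \<longleftrightarrow>
     (\<exists>\<mu>. prob_space \<mu> \<and> sets \<mu> = sets borel \<and>
        (\<forall>f :: real \<Rightarrow> real. continuous_on UNIV f \<and> bounded (range f) \<longrightarrow>
           ((\<lambda>Y. (1 / Y) * (LINT y:{0..Y}|lborel. f (\<phi> y))) \<longlongrightarrow> (\<integral>x. f x \<partial>\<mu>)) at_top))"

end

theory Submission
  imports Defs "HOL-Real_Asymp.Real_Asymp"
begin


definition EI :: "real \<Rightarrow> real \<Rightarrow> real \<Rightarrow> complex" where
  "EI d a b = (if d = 0 then complex_of_real (b - a)
     else (exp (\<i> * complex_of_real (d*b)) - exp (\<i> * complex_of_real (d*a))) / (\<i> * complex_of_real d))"

lemma EI_int:
  assumes "a \<le> b"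
  shows "((\<lambda>y. exp (\<i> * complex_of_real (d*y))) has_integral EI d a b) {a..b}"
proof (cases "d = 0")
  case True
  then show ?thesis using has_integral_const_real[of "1::complex" a b] assms
    by (simp add: EI_def scaleR_conv_of_real)
next
  case False
  have "((\<lambda>y. exp (\<i> * complex_of_real (d*y))) has_integral
        (exp (\<i> * complex_of_real (d*b)) / (\<i> * complex_of_real d) -
         exp (\<i> * complex_of_real (d*a)) / (\<i> * complex_of_real d))) {a..b}"
  proof (rule fundamental_theorem_of_calculus[OF assms])
    fix x assume "x \<in> {a..b}"
    have "((\<lambda>z. exp (\<i> * complex_of_real d * z) / (\<i> * complex_of_real d)) has_field_derivative
            exp (\<i> * complex_of_real d * complex_of_real x) * (\<i> * complex_of_real d) / (\<i> * complex_of_real d)) (at (complex_of_real x))"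
      by (auto intro!: derivative_eq_intros)
    then have "((\<lambda>y. exp (\<i> * complex_of_real d * complex_of_real y) / (\<i> * complex_of_real d)) has_vector_derivative
            exp (\<i> * complex_of_real d * complex_of_real x)) (at x within {a..b})"
      using False by (intro has_vector_derivative_real_field) simp
    then show "((\<lambda>y. exp (\<i> * complex_of_real (d*y)) / (\<i> * complex_of_real d)) has_vector_derivative
            exp (\<i> * complex_of_real (d*x))) (at x within {a..b})"
      by (simp add: of_real_mult mult.assoc)
  qed
  then show ?thesis using False by (simp add: EI_def diff_divide_distrib)
qed

lemma EI_shift:
  "EI d (-t) (b - t) = exp (- (\<i> * complex_of_real (d*t))) * EI d 0 b"
proof (cases "d = 0")
  case True then show ?thesis by (simp add: EI_def)
next
  case False
  have "exp (\<i> * complex_of_real (d*(b-t))) = exp (- (\<i> * complex_of_real (d*t))) * exp (\<i> * complex_of_real (d*b))"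
    by (simp add: exp_add[symmetric] algebra_simps)
  moreover have "exp (\<i> * complex_of_real (d*(-t))) = exp (- (\<i> * complex_of_real (d*t))) * 1"
    by simp
  ultimately show ?thesis using False by (simp add: EI_def algebra_simps diff_divide_distrib)
qed

lemma cmod_exp_i: "cmod (exp (\<i> * complex_of_real x)) = 1"
  by (simp add: norm_exp_eq_Re)

lemma EI_bound1:
  assumes "0 \<le> b" shows "cmod (EI d 0 b) \<le> b"
proof -
  have "cmod (EI d 0 b) \<le> 1 * Henstock_Kurzweil_Integration.content (cbox 0 b)"
    by (rule has_integral_bound[where f="\<lambda>y. exp (\<i> * complex_of_real (d*y))"])
       (use EI_int[of 0 b d] assms in \<open>auto simp: cmod_exp_i\<close>)
  then show ?thesis using assms by simp
qed

lemma EI_bound2: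
  assumes "d \<noteq> 0" shows "cmod (EI d a b) \<le> 2 / \<bar>d\<bar>"
proof -
  have "cmod (exp (\<i> * complex_of_real (d*b)) - exp (\<i> * complex_of_real (d*a))) \<le> 2"
    using norm_triangle_ineq4[of "exp (\<i> * complex_of_real (d*b))" "exp (\<i> * complex_of_real (d*a))"]
    by (simp add: cmod_exp_i)
  then show ?thesis using assms
    by (simp add: EI_def norm_divide norm_mult divide_right_mono)
qed

lemma EI_prod_bound:
  assumes "0 \<le> Y"
  shows "cmod (EI d 0 (Y+1) * EI (-d) 0 1) \<le> 8*(Y+1)/(1+d^2)"
proof (cases "d^2 \<le> 1")
  case True
  have "cmod (EI d 0 (Y+1) * EI (-d) 0 1) \<le> (Y+1) * 1"
    unfolding norm_mult by (rule mult_mono) (use EI_bound1 assms in auto)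
  also have "\<dots> \<le> 8*(Y+1)/(1+d^2)"
  proof -
    have "(Y+1)*(1+d^2) \<le> (Y+1)*8" using True assms by (intro mult_left_mono) auto
    then show ?thesis by (simp add: field_simps add_pos_nonneg)
  qed
  finally show ?thesis .
next
  case False
  then have d: "d \<noteq> 0" by auto
  have "cmod (EI d 0 (Y+1) * EI (-d) 0 1) \<le> (2/\<bar>d\<bar>) * (2/\<bar>d\<bar>)"
    unfolding norm_mult by (rule mult_mono) (use EI_bound2[of d] EI_bound2[of "-d"] d in auto)
  also have "\<dots> = 4 / d^2" by (simp add: power2_eq_square)
  also have "\<dots> \<le> 8/(1+d^2)" using False by (simp add: divide_simps)
  also have "\<dots> \<le> 8*(Y+1)/(1+d^2)" using assms by (simp add: field_simps add_pos_nonneg)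
  finally show ?thesis .
qed


definition Sf :: "nat set \<Rightarrow> (nat \<Rightarrow> complex) \<Rightarrow> (nat \<Rightarrow> real) \<Rightarrow> real \<Rightarrow> complex" where
  "Sf F r lam y = (\<Sum>n\<in>F. r n * exp (\<i> * complex_of_real (lam n * y)))"

lemma continuous_Sf: "continuous_on A (Sf F r lam)"
  unfolding Sf_def by (intro continuous_intros)

lemma sq_expand:
  "complex_of_real ((cmod (Sf F r lam y))^2) =
     (\<Sum>m\<in>F. \<Sum>n\<in>F. r m * cnj (r n) * exp (\<i> * complex_of_real ((lam m - lam n) * y)))"
proof -
  have "complex_of_real ((cmod (Sf F r lam y))^2) = Sf F r lam y * cnj (Sf F r lam y)"
    by (rule complex_norm_square)
  also have "cnj (Sf F r lam y) = (\<Sum>n\<in>F. cnj (r n) * exp (- (\<i> * complex_of_real (lam n * y))))"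
    by (simp add: Sf_def exp_cnj)
  also have "Sf F r lam y * \<dots> = (\<Sum>m\<in>F. \<Sum>n\<in>F. (r m * exp (\<i> * complex_of_real (lam m * y))) *
        (cnj (r n) * exp (- (\<i> * complex_of_real (lam n * y)))))"
    unfolding Sf_def by (rule sum_product)
  also have "\<dots> = (\<Sum>m\<in>F. \<Sum>n\<in>F. r m * cnj (r n) * exp (\<i> * complex_of_real ((lam m - lam n) * y)))"
  proof (intro sum.cong refl)
    fix m n
    have "exp (\<i> * complex_of_real (lam m * y)) * exp (- (\<i> * complex_of_real (lam n * y)))
        = exp (\<i> * complex_of_real ((lam m - lam n) * y))"
      by (simp add: exp_add[symmetric] algebra_simps)
    then show "r m * exp (\<i> * complex_of_real (lam m * y)) * (cnj (r n) * exp (- (\<i> * complex_of_real (lam n * y)))) =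
       r m * cnj (r n) * exp (\<i> * complex_of_real ((lam m - lam n) * y))"
      by (metis (no_types, lifting) mult.assoc mult.left_commute)
  qed
  finally show ?thesis .
qed

lemma has_integral_Re':
  "(f has_integral I) S \<Longrightarrow> ((\<lambda>x. Re (f x)) has_integral Re I) S"
  using has_integral_linear[OF _ bounded_linear_Re] by (simp add: o_def)

lemma sq_has_integral:
  assumes "finite F" "a \<le> b"
  shows "((\<lambda>y. (cmod (Sf F r lam y))^2) has_integral
     Re (\<Sum>m\<in>F. \<Sum>n\<in>F. r m * cnj (r n) * EI (lam m - lam n) a b)) {a..b}"
proof -
  have "((\<lambda>y. complex_of_real ((cmod (Sf F r lam y))^2)) has_integral
     (\<Sum>m\<in>F. \<Sum>n\<in>F. r m * cnj (r n) * EI (lam m - lam n) a b)) {a..b}"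
    unfolding sq_expand
    by (intro has_integral_sum assms has_integral_mult_right EI_int)
  from has_integral_Re'[OF this] show ?thesis by simp
qed

lemma amgm_double:
  fixes w :: "nat \<Rightarrow> nat \<Rightarrow> real" and a :: "nat \<Rightarrow> real"
  assumes "finite F" "\<And>m n. w m n = w n m" "\<And>m n. 0 \<le> w m n"
  shows "(\<Sum>m\<in>F. \<Sum>n\<in>F. \<bar>a m\<bar> * \<bar>a n\<bar> * w m n) \<le> (\<Sum>m\<in>F. (a m)^2 * (\<Sum>n\<in>F. w m n))"
proof -
  have "(\<Sum>m\<in>F. \<Sum>n\<in>F. \<bar>a m\<bar> * \<bar>a n\<bar> * w m n) \<le>
        (\<Sum>m\<in>F. \<Sum>n\<in>F. ((a m)^2/2 + (a n)^2/2) * w m n)"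
  proof (intro sum_mono mult_right_mono assms)
    fix m n
    have "0 \<le> (\<bar>a m\<bar> - \<bar>a n\<bar>)^2" by simp
    then show "\<bar>a m\<bar> * \<bar>a n\<bar> \<le> (a m)^2/2 + (a n)^2/2"
      by (simp add: power2_eq_square algebra_simps)
  qed
  also have "\<dots> = (\<Sum>m\<in>F. \<Sum>n\<in>F. (a m)^2/2 * w m n) + (\<Sum>m\<in>F. \<Sum>n\<in>F. (a n)^2/2 * w m n)"
    by (simp add: distrib_right sum.distrib)
  also have "(\<Sum>m\<in>F. \<Sum>n\<in>F. (a n)^2/2 * w m n) = (\<Sum>m\<in>F. \<Sum>n\<in>F. (a m)^2/2 * w m n)"
    by (subst sum.swap, subst assms(2), rule refl)
  also have "(\<Sum>m\<in>F. \<Sum>n\<in>F. (a m)^2/2 * w m n) + (\<Sum>m\<in>F. \<Sum>n\<in>F. (a m)^2/2 * w m n)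
       = (\<Sum>m\<in>F. (a m)^2 * (\<Sum>n\<in>F. w m n))"
    by (simp add: sum_distrib_left sum_distrib_right sum.distrib[symmetric] mult.commute)
  finally show ?thesis .
qed

lemma MV:
  assumes F: "finite F" and Y: "0 \<le> Y"
  shows "integral {0..Y} (\<lambda>y. (cmod (Sf F r lam y))^2) \<le>
     8*(Y+1) * (\<Sum>m\<in>F. (cmod (r m))^2 * (\<Sum>n\<in>F. 1/(1+(lam m - lam n)^2)))"
proof -
  define h where "h y = (cmod (Sf F r lam y))^2" for y
  define c where "c m n = r m * cnj (r n)" for m n
  define D where "D m n = lam m - lam n" for m n
  define G where "G t = (\<Sum>m\<in>F. \<Sum>n\<in>F. c m n * EI (D m n) 0 (Y+1) * exp (\<i> * complex_of_real (- D m n * t)))" for t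
  define V where "V = (\<Sum>m\<in>F. \<Sum>n\<in>F. c m n * EI (D m n) 0 (Y+1) * EI (- D m n) 0 1)"
  have hint: "(h has_integral Re (\<Sum>m\<in>F. \<Sum>n\<in>F. c m n * EI (D m n) a b)) {a..b}" if "a \<le> b" for a b
    unfolding h_def c_def D_def using sq_has_integral[OF F that] .
  have hcont: "continuous_on A h" for A unfolding h_def
    by (intro continuous_intros continuous_Sf)
  have step: "integral {0..Y} h \<le> Re (G t)" if t: "t \<in> {0..1}" for t
  proof -
    have "integral {0..Y} h \<le> integral {-t..(Y+1)-t} h"
      by (rule integral_subset_le) (use t Y in \<open>auto intro!: integrable_continuous_interval hcont simp: h_def\<close>)
    also have "\<dots> = Re (\<Sum>m\<in>F. \<Sum>n\<in>F. c m n * EI (D m n) (-t) ((Y+1)-t))"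
      using hint[of "-t" "(Y+1)-t"] t Y by (simp add: integral_unique)
    also have "\<dots> = Re (G t)"
      unfolding G_def EI_shift by (simp add: mult_ac)
    finally show ?thesis .
  qed
  have Gint: "((\<lambda>t. Re (G t)) has_integral Re V) {0..1}"
  proof -
    have "(G has_integral V) {0..1}"
      unfolding G_def V_def
      by (intro has_integral_sum F has_integral_mult_right EI_int) simp
    from has_integral_Re'[OF this] show ?thesis .
  qed
  have "integral {0..Y} h \<le> Re V"
    using has_integral_le[OF _ Gint, of "\<lambda>_. integral {0..Y} h" "integral {0..Y} h"] step
      has_integral_const_real[of "integral {0..Y} h" 0 1] by simp
  also have "\<dots> \<le> cmod V" by (rule complex_Re_le_cmod)
  also have "\<dots> \<le> (\<Sum>m\<in>F. \<Sum>n\<in>F. cmod (c m n * EI (D m n) 0 (Y+1) * EI (- D m n) 0 1))"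
    unfolding V_def by (intro order.trans[OF norm_sum sum_mono] norm_sum)
  also have "\<dots> \<le> (\<Sum>m\<in>F. \<Sum>n\<in>F. \<bar>cmod (r m)\<bar> * \<bar>cmod (r n)\<bar> * (8*(Y+1)*(1/(1+(lam m - lam n)^2))))"
  proof (intro sum_mono)
    fix m n
    have "cmod (c m n * EI (D m n) 0 (Y+1) * EI (- D m n) 0 1) =
        cmod (c m n) * cmod (EI (D m n) 0 (Y+1) * EI (- D m n) 0 1)"
      by (simp add: norm_mult mult.assoc)
    also have "\<dots> \<le> cmod (c m n) * (8*(Y+1)/(1+(D m n)^2))"
      by (intro mult_left_mono EI_prod_bound Y) simp
    finally show "cmod (c m n * EI (D m n) 0 (Y+1) * EI (- D m n) 0 1) \<le>
        \<bar>cmod (r m)\<bar> * \<bar>cmod (r n)\<bar> * (8*(Y+1)*(1/(1+(lam m - lam n)^2)))"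
      by (simp add: c_def D_def norm_mult)
  qed
  also have "\<dots> \<le> (\<Sum>m\<in>F. (cmod (r m))^2 * (\<Sum>n\<in>F. 8*(Y+1)*(1/(1+(lam m - lam n)^2))))"
    by (rule amgm_double[OF F]) (use Y in \<open>auto simp: power2_commute add_pos_nonneg\<close>)
  also have "\<dots> = 8*(Y+1) * (\<Sum>m\<in>F. (cmod (r m))^2 * (\<Sum>n\<in>F. 1/(1+(lam m - lam n)^2)))"
    by (simp add: sum_distrib_left[symmetric] sum_distrib_left mult_ac)
  finally show ?thesis unfolding h_def .
qed



definition hh :: "real \<Rightarrow> real" where "hh t = (1+t) powr (-3/2)"

lemma hh_nonneg: "0 \<le> hh t" by (simp add: hh_def)

lemma hh_antimono: "0 \<le> s \<Longrightarrow> s \<le> t \<Longrightarrow> hh t \<le> hh s"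
  unfolding hh_def by (intro powr_mono2') auto

lemma summable_hh: "summable (\<lambda>k::nat. hh (real k))"
proof -
  have "summable (\<lambda>n::nat. real n powr (-3/2))" by (simp add: summable_real_powr_iff)
  then have "summable (\<lambda>n::nat. real (Suc n) powr (-3/2))"
    using summable_Suc_iff[of "\<lambda>n::nat. real n powr (-3/2)"] by simp
  then show ?thesis by (simp add: hh_def add.commute)
qed

lemma hh_bound:
  assumes t: "0 \<le> t"
  shows "(1 + ln (1+t)) / (1+t^2) \<le> 6 * hh t"
proof -
  define u where "u = 1+t"
  have u: "1 \<le> u" using t by (simp add: u_def)
  have su: "1 \<le> sqrt u" using u by simp
  have "ln u = 2 * ln (sqrt u)" using u by (simp add: ln_sqrt)
  also have "\<dots> \<le> 2 * (sqrt u - 1)" using ln_le_minus_one[of "sqrt u"] su by simp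
  finally have l: "1 + ln u \<le> 3 * sqrt u" using su by (smt (verit))
  have q: "u^2 \<le> 2*(1+t^2)" unfolding u_def using t
    using sum_squares_ge_zero[of "t-1" 0] by (simp add: power2_eq_square algebra_simps)
  have "(1 + ln u) / (1+t^2) \<le> (3 * sqrt u) / (u^2/2)"
    by (rule frac_le) (use l q u su in \<open>auto simp: add_pos_nonneg\<close>)
  also have "\<dots> = 6 * (1 / (u * sqrt u))"
    using u by (simp add: power2_eq_square field_simps)
  also have "1 / (u * sqrt u) = u powr (-3/2)"
  proof -
    have h32: "(3/2::real) = 1 + 1/2" by simp
    have "u powr (3/2) = u powr 1 * u powr (1/2)" by (simp only: h32 powr_add)
    also have "\<dots> = u * sqrt u" using u by (simp only: powr_one_eq_one powr_half_sqrt powr_one)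
    finally have "u powr (3/2) = u * sqrt u" .
    moreover have "u powr (-3/2) = u powr (-(3/2))" by simp
    moreover have "u powr (-(3/2)) = inverse (u powr (3/2))" by (rule powr_minus)
    ultimately show ?thesis by (metis inverse_eq_divide)
  qed
  finally show ?thesis by (simp add: hh_def u_def)
qed

lemma sum_hh_dist:
  fixes J :: "nat set"
  assumes "finite J" "0 < x"
  shows "(\<Sum>j\<in>J. hh \<bar>real j - x\<bar>) \<le> 2 * (\<Sum>k. hh (real k))"
proof -
  define J1 where "J1 = {j\<in>J. x \<le> real j}"
  define J2 where "J2 = {j\<in>J. real j < x}"
  have fin: "finite J1" "finite J2" using assms by (auto simp: J1_def J2_def)
  have split: "(\<Sum>j\<in>J. hh \<bar>real j - x\<bar>) = (\<Sum>j\<in>J1. hh \<bar>real j - x\<bar>) + (\<Sum>j\<in>J2. hh \<bar>real j - x\<bar>)"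
  proof -
    have "J = J1 \<union> J2" "J1 \<inter> J2 = {}" by (auto simp: J1_def J2_def)
    then show ?thesis using fin by (simp add: sum.union_disjoint)
  qed
  define c where "c = nat \<lceil>x\<rceil>"
  define f where "f = nat \<lfloor>x\<rfloor>"
  have s1: "(\<Sum>j\<in>J1. hh \<bar>real j - x\<bar>) \<le> (\<Sum>k. hh (real k))"
  proof -
    have ge: "c \<le> j" if "j \<in> J1" for j
      using that assms(2) unfolding J1_def c_def by (auto simp: nat_le_iff ceiling_le_iff)
    have "(\<Sum>j\<in>J1. hh \<bar>real j - x\<bar>) \<le> (\<Sum>j\<in>J1. hh (real (j - c)))"
    proof (intro sum_mono hh_antimono)
      fix j assume j: "j \<in> J1"
      have "real c \<ge> x" unfolding c_def using assms(2) by linarith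
      then show "real (j - c) \<le> \<bar>real j - x\<bar>" using ge[OF j] j by (auto simp: J1_def of_nat_diff)
    qed simp
    also have "\<dots> = (\<Sum>k\<in>(\<lambda>j. j - c) ` J1. hh (real k))"
      by (rule sum.reindex[symmetric, unfolded o_def]) (rule inj_onI, metis ge le_add_diff_inverse2)
    also have "\<dots> \<le> (\<Sum>k. hh (real k))"
      by (rule sum_le_suminf[OF summable_hh]) (use fin in \<open>auto simp: hh_nonneg\<close>)
    finally show ?thesis .
  qed
  have s2: "(\<Sum>j\<in>J2. hh \<bar>real j - x\<bar>) \<le> (\<Sum>k. hh (real k))"
  proof -
    have le: "j \<le> f" if "j \<in> J2" for j
      using that assms(2) unfolding J2_def f_def by (auto simp: le_nat_iff le_floor_iff)
    have "(\<Sum>j\<in>J2. hh \<bar>real j - x\<bar>) \<le> (\<Sum>j\<in>J2. hh (real (f - j)))"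
    proof (intro sum_mono hh_antimono)
      fix j assume j: "j \<in> J2"
      have "real f \<le> x" unfolding f_def using assms(2) by linarith
      then show "real (f - j) \<le> \<bar>real j - x\<bar>" using le[OF j] j by (auto simp: J2_def of_nat_diff)
    qed simp
    also have "\<dots> = (\<Sum>k\<in>(\<lambda>j. f - j) ` J2. hh (real k))"
      by (rule sum.reindex[symmetric, unfolded o_def]) (rule inj_onI, metis le diff_diff_cancel)
    also have "\<dots> \<le> (\<Sum>k. hh (real k))"
      by (rule sum_le_suminf[OF summable_hh]) (use fin in \<open>auto simp: hh_nonneg\<close>)
    finally show ?thesis .
  qed
  show ?thesis using split s1 s2 by simp
qed


lemma finite_lam_le:
  assumes "filterlim (lam::nat\<Rightarrow>real) at_top sequentially"
  shows "finite {n. lam n \<le> X}"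
proof -
  from assms have "\<forall>\<^sub>F n in sequentially. X + 1 \<le> lam n"
    by (simp add: filterlim_at_top)
  then obtain N where N: "\<And>n. N \<le> n \<Longrightarrow> X + 1 \<le> lam n"
    by (auto simp: eventually_sequentially)
  have "{n. lam n \<le> X} \<subseteq> {..<N}"
    using N by (force simp: not_less[symmetric])
  then show ?thesis by (rule finite_subset) simp
qed

lemma count_unit:
  assumes lim: "filterlim (lam::nat\<Rightarrow>real) at_top sequentially"
    and cnt: "\<exists>M>0. \<forall>\<^sub>F T in at_top. real (card {n. T < lam n \<and> lam n \<le> T + 1}) \<le> M * \<bar>ln T\<bar>"
  shows "\<exists>N0 M. 0 \<le> N0 \<and> 0 \<le> M \<and>
    (\<forall>j::nat. real (card {n. real j < lam n \<and> lam n \<le> real j + 1}) \<le> N0 + M * ln (real j + 1))"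
proof -
  obtain M T0 where M: "M > 0" and T0: "\<And>T. T \<ge> T0 \<Longrightarrow> real (card {n. T < lam n \<and> lam n \<le> T + 1}) \<le> M * \<bar>ln T\<bar>"
    using cnt by (auto simp: eventually_at_top_linorder)
  define T1 where "T1 = max T0 1"
  define N0 where "N0 = real (card {n. lam n \<le> T1 + 1})"
  have fin: "finite {n. lam n \<le> T1 + 1}" by (rule finite_lam_le[OF lim])
  show ?thesis
  proof (intro exI conjI allI)
    show "0 \<le> N0" "0 \<le> M" using M by (auto simp: N0_def)
    fix j :: nat
    show "real (card {n. real j < lam n \<and> lam n \<le> real j + 1}) \<le> N0 + M * ln (real j + 1)"
    proof (cases "real j \<ge> T1")
      case True
      then have j1: "real j \<ge> 1" "real j \<ge> T0" by (auto simp: T1_def)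
      have "real (card {n. real j < lam n \<and> lam n \<le> real j + 1}) \<le> M * \<bar>ln (real j)\<bar>"
        using T0[OF j1(2)] .
      also have "\<dots> \<le> M * ln (real j + 1)"
        using j1 M by (intro mult_left_mono) auto
      also have "\<dots> \<le> N0 + M * ln (real j + 1)" by (simp add: N0_def)
      finally show ?thesis .
    next
      case False
      have "{n. real j < lam n \<and> lam n \<le> real j + 1} \<subseteq> {n. lam n \<le> T1 + 1}"
        using False by auto
      then have "card {n. real j < lam n \<and> lam n \<le> real j + 1} \<le> card {n. lam n \<le> T1 + 1}"
        by (rule card_mono[OF fin])
      then have "real (card {n. real j < lam n \<and> lam n \<le> real j + 1}) \<le> N0" by (simp add: N0_def)
      moreover have "0 \<le> M * ln (real j + 1)" using M by simp
      ultimately show ?thesis by linarith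
    qed
  qed
qed

lemma aux_lin3: "(a::real) \<le> 2*b + 2*c \<Longrightarrow> c \<le> 1 \<Longrightarrow> 0 \<le> b \<Longrightarrow> 1 + a \<le> 3*(1+b)"
  by (smt (verit))

lemma count_bound:
  assumes pos: "\<And>n. lam n > (0::real)"
    and lim: "filterlim lam at_top sequentially"
    and cnt: "\<exists>M>0. \<forall>\<^sub>F T in at_top. real (card {n. T < lam n \<and> lam n \<le> T + 1}) \<le> M * \<bar>ln T\<bar>"
  shows "\<exists>D\<ge>0. \<forall>x>0. \<forall>F. finite F \<longrightarrow> (\<Sum>n\<in>F. 1/(1+(x - lam n)^2)) \<le> D*(1+ln(1+x))"
proof -
  obtain N0 M where N0: "0 \<le> N0" and M: "0 \<le> M"
    and cu: "\<And>j::nat. real (card {n. real j < lam n \<and> lam n \<le> real j + 1}) \<le> N0 + M * ln (real j + 1)"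
    using count_unit[OF lim cnt] by blast
  define jn where "jn n = nat (\<lceil>lam n\<rceil> - 1)" for n
  have jn1: "real (jn n) < lam n" and jn2: "lam n \<le> real (jn n) + 1" for n
  proof -
    have "\<lceil>lam n\<rceil> \<ge> 1" using pos[of n] by (simp add: one_le_ceiling) 
    then have e: "real (jn n) = real_of_int \<lceil>lam n\<rceil> - 1" by (simp add: jn_def)
    show "real (jn n) < lam n" unfolding e by linarith
    show "lam n \<le> real (jn n) + 1" unfolding e by linarith
  qed
  define S where "S = (\<Sum>k. hh (real k))"
  have S0: "0 \<le> S" unfolding S_def by (intro suminf_nonneg summable_hh hh_nonneg)
  show ?thesis
  proof (intro exI[of _ "36*(N0+M)*S"] conjI allI impI)
    show "0 \<le> 36*(N0+M)*S" using N0 M S0 by simp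
    fix x :: real and F :: "nat set"
    assume x: "0 < x" and F: "finite F"
    define L where "L = ln (1+x)"
    have L0: "0 \<le> L" using x by (simp add: L_def)
    have "(\<Sum>n\<in>F. 1/(1+(x - lam n)^2)) = (\<Sum>j\<in>jn ` F. \<Sum>n\<in>{n\<in>F. jn n = j}. 1/(1+(x - lam n)^2))"
      by (rule sum.image_gen[OF F])
    also have "\<dots> \<le> (\<Sum>j\<in>jn ` F. 18*(N0+M)*(1+L) * hh \<bar>real j - x\<bar>)"
    proof (rule sum_mono)
      fix j assume "j \<in> jn ` F"
      define t where "t = \<bar>real j - x\<bar>"
      have t0: "0 \<le> t" by (simp add: t_def)
      have "(\<Sum>n\<in>{n\<in>F. jn n = j}. 1/(1+(x - lam n)^2)) \<le> (\<Sum>n\<in>{n\<in>F. jn n = j}. 3/(1+(x - real j)^2))"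
      proof (rule sum_mono)
        fix n assume "n \<in> {n\<in>F. jn n = j}"
        then have a: "real j < lam n" "lam n \<le> real j + 1" using jn1[of n] jn2[of n] by auto
        have "(x - real j)^2 \<le> 2*(x - lam n)^2 + 2*(lam n - real j)^2"
          using sum_squares_ge_zero[of "x - lam n - (lam n - real j)" 0]
          by (simp add: power2_eq_square algebra_simps)
        moreover have "(lam n - real j)^2 \<le> 1" using a by (intro power_le_one) auto
        ultimately have "1 + (x - real j)^2 \<le> 3 * (1 + (x - lam n)^2)"
          by (rule aux_lin3) simp
        then show "1/(1+(x - lam n)^2) \<le> 3/(1+(x - real j)^2)"
          by (simp add: field_simps add_pos_nonneg)
      qed
      also have "\<dots> = real (card {n\<in>F. jn n = j}) * (3/(1+(x - real j)^2))" by simp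
      also have "\<dots> \<le> (N0 + M * ln (real j + 1)) * (3/(1+(x - real j)^2))"
      proof (rule mult_right_mono)
        have "{n\<in>F. jn n = j} \<subseteq> {n. real j < lam n \<and> lam n \<le> real j + 1}"
          using jn1 jn2 by auto
        moreover have "finite {n. real j < lam n \<and> lam n \<le> real j + 1}"
          by (rule finite_subset[OF _ finite_lam_le[OF lim, of "real j + 1"]]) auto
        ultimately have "card {n\<in>F. jn n = j} \<le> card {n. real j < lam n \<and> lam n \<le> real j + 1}"
          by (rule card_mono[rotated])
        then show "real (card {n\<in>F. jn n = j}) \<le> N0 + M * ln (real j + 1)"
          using cu[of j] by linarith
      qed (simp add: add_pos_nonneg)
      also have "\<dots> \<le> (N0 + M)*(1+L)*(1 + ln (1+t)) * (3/(1+t^2))"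
      proof -
        have "real j + 1 \<le> (1+x)*(1+t)"
        proof -
          have "real j \<le> x + t" by (simp add: t_def)
          moreover have "0 \<le> x*t" using x t0 by simp
          moreover have "(1+x)*(1+t) = 1 + x + t + x*t" by (simp add: algebra_simps)
          ultimately show ?thesis by linarith
        qed
        then have "ln (real j + 1) \<le> ln ((1+x)*(1+t))" by simp
        also have "\<dots> = L + ln (1+t)" using x t0 by (simp add: L_def ln_mult)
        finally have lj: "ln (real j + 1) \<le> L + ln (1+t)" .
        have l0: "0 \<le> ln (1+t)" using t0 by simp
        have "N0 + M * ln (real j + 1) \<le> N0 + M * (L + ln (1+t))"
          using lj M by (simp add: mult_left_mono)
        also have "\<dots> \<le> (N0 + M)*(1+L)*(1 + ln (1+t))"
        proof -
          have "0 \<le> N0*(L+ln (1+t)+L*ln (1+t)) + M*(1+L*ln (1+t))"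
            using N0 M L0 l0 by (intro add_nonneg_nonneg mult_nonneg_nonneg) auto
          moreover have "(N0 + M)*(1+L)*(1 + ln (1+t)) = N0 + M * (L + ln (1+t)) +
              (N0*(L+ln (1+t)+L*ln (1+t)) + M*(1+L*ln (1+t)))" by (simp add: algebra_simps)
          ultimately show ?thesis by linarith
        qed
        finally have "N0 + M * ln (real j + 1) \<le> (N0 + M)*(1+L)*(1 + ln (1+t))" .
        moreover have "(x - real j)^2 = t^2" unfolding t_def power2_abs by (rule power2_commute)
        moreover have "0 \<le> (N0 + M) * (1 + L) * (1 + ln (1 + t))"
          using N0 M L0 t0 by (intro mult_nonneg_nonneg) auto
        ultimately show ?thesis by (intro mult_mono) (auto simp: add_pos_nonneg)
      qed
      also have "\<dots> = 3*(N0 + M)*(1+L) * ((1 + ln (1+t)) / (1+t^2))" by (simp add: field_simps)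
      also have "\<dots> \<le> 3*(N0 + M)*(1+L) * (6 * hh t)"
        by (intro mult_left_mono hh_bound t0) (use N0 M L0 in simp)
      finally show "(\<Sum>n\<in>{n\<in>F. jn n = j}. 1/(1+(x - lam n)^2)) \<le> 18*(N0+M)*(1+L) * hh \<bar>real j - x\<bar>"
        by (simp add: t_def algebra_simps)
    qed
    also have "\<dots> = 18*(N0+M)*(1+L) * (\<Sum>j\<in>jn ` F. hh \<bar>real j - x\<bar>)"
      by (simp add: sum_distrib_left)
    also have "\<dots> \<le> 18*(N0+M)*(1+L) * (2*S)"
      by (intro mult_left_mono sum_hh_dist[unfolded S_def[symmetric]] x) (use F N0 M L0 in auto)
    finally show "(\<Sum>n\<in>F. 1/(1+(x - lam n)^2)) \<le> 36*(N0+M)*S*(1+ln(1+x))"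
      by (simp add: L_def algebra_simps)
  qed
qed



lemma summable_poly_geom:
  assumes q: "0 \<le> q" "q < (1::real)"
  shows "summable (\<lambda>k::nat. (real k + 3)^2 * q^k)"
proof -
  define c where "c = (1+q)/2"
  have c: "c < 1" "q < c" using q by (auto simp: c_def)
  have "((\<lambda>k::nat. ((real k + 4)/(real k + 3))^2 * q) \<longlongrightarrow> q) at_top"
    by real_asymp
  from order_tendstoD(2)[OF this c(2)] obtain N where
    N: "\<And>k. k \<ge> N \<Longrightarrow> ((real k + 4)/(real k + 3))^2 * q < c"
    by (auto simp: eventually_at_top_linorder)
  show ?thesis
  proof (rule summable_ratio_test[OF c(1), of N])
    fix n assume n: "n \<ge> N"
    have "(real (Suc n) + 3)^2 * q^(Suc n) = (((real n + 4)/(real n + 3))^2 * q) * ((real n + 3)^2 * q^n)"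
    proof -
      have b: "real n + 3 \<noteq> 0" by simp
      have "(real (Suc n) + 3)^2 * q^(Suc n) = (real n + 4)^2 * (q * q^n)" by simp
      also have "\<dots> = (((real n + 4)/(real n + 3))^2 * (real n + 3)^2) * (q * q^n)"
        using b by (simp add: power_divide)
      finally show ?thesis by (simp add: mult_ac)
    qed
    also have "\<dots> \<le> c * ((real n + 3)^2 * q^n)"
      using N[OF n] q by (intro mult_right_mono) auto
    finally show "norm ((real (Suc n) + 3)^2 * q^(Suc n)) \<le> c * norm ((real n + 3)^2 * q^n)"
      using q by simp
  qed
qed

lemma dyadic_prop:
  assumes "1 \<le> (x::real)"
  shows "2 ^ nat \<lfloor>log 2 x\<rfloor> \<le> x \<and> x < 2 ^ (nat \<lfloor>log 2 x\<rfloor> + 1)"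
proof -
  have l0: "0 \<le> \<lfloor>log 2 x\<rfloor>" using assms by simp
  have "2 powr (real_of_int \<lfloor>log 2 x\<rfloor>) \<le> x \<and> x < 2 powr (real_of_int \<lfloor>log 2 x\<rfloor> + 1)"
    using floor_log_eq_powr_iff[of x 2 "\<lfloor>log 2 x\<rfloor>"] assms by simp
  moreover have "real_of_int \<lfloor>log 2 x\<rfloor> = real (nat \<lfloor>log 2 x\<rfloor>)" using l0 by simp
  ultimately show ?thesis
    by (simp add: powr_realpow[symmetric] powr_add)
qed

lemma dyadic_summable:
  fixes w :: "nat \<Rightarrow> real" and lam :: "nat \<Rightarrow> real"
  assumes lim: "filterlim lam at_top sequentially"
    and w0: "\<And>n. 0 \<le> w n"
    and q: "0 \<le> q" "q < 1" and C: "0 \<le> C"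
    and block: "\<And>k F. k \<ge> K0 \<Longrightarrow> finite F \<Longrightarrow>
       (\<Sum>n\<in>{n\<in>F. 2^k \<le> lam n \<and> lam n < 2^(k+1)}. w n) \<le> C * (real k + 3)^2 * q^k"
  shows "summable w"
proof -
  define kn where "kn n = nat \<lfloor>log 2 (lam n)\<rfloor>" for n
  define CA where "CA = (\<Sum>n\<in>{n. lam n \<le> 2^K0}. w n)"
  define f where "f k = C * ((real k + 3)^2 * q^k)" for k
  have sf: "summable f" unfolding f_def by (intro summable_mult summable_poly_geom q)
  have f0: "0 \<le> f k" for k unfolding f_def using q C by simp
  show ?thesis
  proof (rule summableI_nonneg_bounded[OF w0])
    fix N
    define A where "A = {n\<in>{..<N}. lam n < 2^K0}"
    define B where "B = {n\<in>{..<N}. \<not> lam n < 2^K0}"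
    have "(\<Sum>i<N. w i) = (\<Sum>n\<in>A. w n) + (\<Sum>n\<in>B. w n)"
    proof -
      have e: "{..<N} = A \<union> B" and d: "A \<inter> B = {}" by (auto simp: A_def B_def)
      have fA: "finite A" and fB: "finite B" by (auto simp: A_def B_def)
      show ?thesis unfolding e by (rule sum.union_disjoint[OF fA fB d])
    qed
    also have "(\<Sum>n\<in>A. w n) \<le> CA"
      unfolding CA_def
      by (rule sum_mono2[OF finite_lam_le[OF lim]]) (auto simp: A_def w0)
    also have "(\<Sum>n\<in>B. w n) \<le> suminf f"
    proof -
      have Bp: "K0 \<le> kn n \<and> 2^kn n \<le> lam n \<and> lam n < 2^(kn n + 1)" if "n \<in> B" for n
      proof -
        have l: "2^K0 \<le> lam n" using that by (auto simp: B_def)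
        have "(1::real) \<le> 2^K0" by simp
        then have "1 \<le> lam n" using l by linarith
        from dyadic_prop[OF this] have d: "2^kn n \<le> lam n \<and> lam n < 2^(kn n + 1)"
          by (simp add: kn_def)
        then have "(2::real)^K0 < 2^(kn n + 1)" using l by linarith
        then have "K0 < kn n + 1" using power_strict_increasing_iff[of "2::real" K0 "kn n + 1"] by simp
        then show ?thesis using d by simp
      qed
      have "(\<Sum>n\<in>B. w n) = (\<Sum>k\<in>kn ` B. \<Sum>n\<in>{n\<in>B. kn n = k}. w n)"
        by (rule sum.image_gen) (simp add: B_def)
      also have "\<dots> \<le> (\<Sum>k\<in>kn ` B. f k)"
      proof (rule sum_mono)
        fix k assume k: "k \<in> kn ` B"
        have "{n\<in>{n\<in>B. kn n = k}. 2^k \<le> lam n \<and> lam n < 2^(k+1)} = {n\<in>B. kn n = k}"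
          using Bp by auto
        moreover have "k \<ge> K0" using k Bp by auto
        ultimately show "(\<Sum>n\<in>{n\<in>B. kn n = k}. w n) \<le> f k"
          using block[of k "{n\<in>B. kn n = k}"] by (simp add: f_def B_def mult.assoc)
      qed
      also have "\<dots> \<le> suminf f"
        by (rule sum_le_suminf[OF sf]) (auto simp: B_def f0)
      finally show ?thesis .
    qed
    finally show "(\<Sum>i<N. w i) \<le> CA + suminf f" by simp
  qed
qed


lemma pow2_powr: "((2::real)^k) powr a = (2 powr a)^k"
proof -
  have "((2::real)^k) powr a = (2 powr real k) powr a" by (simp add: powr_realpow)
  also have "\<dots> = 2 powr (real k * a)" by (rule powr_powr)
  also have "\<dots> = (2 powr a)^k" by (simp add: powr_power)
  finally show ?thesis .
qed

lemma log_factor_bound: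
  assumes "0 < x" "x < 2^(k+1)"
  shows "1 + ln (1 + x) \<le> real k + 3"
proof -
  have o: "(1::real) \<le> 2^k" by simp
  have p: "(2::real)^(k+1) = 2*2^k" by simp
  have "1 + x \<le> 4 * 2^k" using assms(2) o p by linarith
  then have "1 + x \<le> 2^(k+2)" by simp
  then have "ln (1+x) \<le> ln (2^(k+2))" using assms by simp
  also have "\<dots> = real (k+2) * ln 2" by (rule ln_realpow)
  also have "\<dots> \<le> real (k+2) * 1" using ln_2_less_1 by (intro mult_left_mono) auto
  finally show ?thesis by simp
qed

lemma case_b_summable:
  fixes lam :: "nat \<Rightarrow> real" and r :: "nat \<Rightarrow> complex"
  assumes pos: "\<And>n. lam n > 0" and lim: "filterlim lam at_top sequentially"
    and th: "0 \<le> \<theta>" "\<theta> < 2"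
    and hyp: "\<exists>M>0. \<forall>\<^sub>F T in at_top.
             \<bar>\<Sum>n\<in>{n. lam n \<le> T}. (lam n)^2 * (cmod (r n))^2\<bar> \<le> M * \<bar>T powr \<theta>\<bar>"
  shows "summable (\<lambda>n. (cmod (r n))^2 * (1 + ln (1 + lam n)))"
proof -
  obtain M T0 where M: "M > 0" and T0: "\<And>T. T \<ge> T0 \<Longrightarrow>
      \<bar>\<Sum>n\<in>{n. lam n \<le> T}. (lam n)^2 * (cmod (r n))^2\<bar> \<le> M * \<bar>T powr \<theta>\<bar>"
    using hyp by (auto simp: eventually_at_top_linorder)
  obtain K0 where K0: "max T0 1 < 2^K0" using real_arch_pow[of 2 "max T0 1"] by auto
  define q where "q = 2 powr \<theta> / 4"
  have q0: "0 \<le> q" by (simp add: q_def)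
  have q1: "q < 1"
  proof -
    have "2 powr \<theta> < 2 powr (2::real)" using th by (intro powr_less_mono) auto
    then show ?thesis by (simp add: q_def)
  qed
  show ?thesis
  proof (rule dyadic_summable[OF lim _ q0 q1, of _ "M * 2 powr \<theta>" K0])
    show "0 \<le> M * 2 powr \<theta>" using M by simp
    show "0 \<le> (cmod (r n))^2 * (1 + ln (1 + lam n))" for n using pos[of n] by simp
    fix k :: nat and F :: "nat set" assume k: "K0 \<le> k" and F: "finite F"
    define G where "G = {n\<in>F. 2^k \<le> lam n \<and> lam n < 2^(k+1)}"
    have "(\<Sum>n\<in>G. (cmod (r n))^2 * (1 + ln (1 + lam n))) \<le>
          (\<Sum>n\<in>G. (lam n)^2 * (cmod (r n))^2 * ((real k + 3) / 4^k))"
    proof (rule sum_mono)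
      fix n assume n: "n \<in> G"
      have l: "2^k \<le> lam n" "lam n < 2^(k+1)" using n by (auto simp: G_def)
      have lp: "0 < lam n" by (rule pos)
      have "(cmod (r n))^2 * (1 + ln (1 + lam n)) = (lam n)^2 * (cmod (r n))^2 * ((1 + ln (1 + lam n)) / (lam n)^2)"
        using lp by (simp add: field_simps)
      also have "\<dots> \<le> (lam n)^2 * (cmod (r n))^2 * ((real k + 3) / 4^k)"
      proof (intro mult_left_mono frac_le)
        show "1 + ln (1 + lam n) \<le> real k + 3" by (rule log_factor_bound[OF lp l(2)])
        have "(2^k)^2 \<le> (lam n)^2" using l by (intro power_mono) auto
        moreover have "(4::real)^k = (2^k)^2" by (induction k) (simp_all add: power2_eq_square)
        ultimately show "4^k \<le> (lam n)^2" by simp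
      qed (use lp in auto)
      finally show "(cmod (r n))^2 * (1 + ln (1 + lam n)) \<le> (lam n)^2 * (cmod (r n))^2 * ((real k + 3) / 4^k)" .
    qed
    also have "\<dots> = (\<Sum>n\<in>G. (lam n)^2 * (cmod (r n))^2) * ((real k + 3) / 4^k)"
      by (rule sum_distrib_right[symmetric])
    also have "\<dots> \<le> (M * 2 powr \<theta> * (2 powr \<theta>)^k) * ((real k + 3) / 4^k)"
    proof (rule mult_right_mono)
      have T: "2^(k+1) \<ge> T0"
      proof -
        have "(2::real)^K0 \<le> 2^(k+1)" using k by (intro power_increasing) auto
        then show ?thesis using K0 by linarith
      qed
      have fin: "finite {n. lam n \<le> 2^(k+1)}" by (rule finite_lam_le[OF lim])
      have "(\<Sum>n\<in>G. (lam n)^2 * (cmod (r n))^2) \<le> (\<Sum>n\<in>{n. lam n \<le> 2^(k+1)}. (lam n)^2 * (cmod (r n))^2)"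
        by (rule sum_mono2[OF fin]) (auto simp: G_def)
      also have "\<dots> \<le> M * \<bar>(2^(k+1)) powr \<theta>\<bar>"
        using T0[OF T] by linarith
      also have "\<bar>((2::real)^(k+1)) powr \<theta>\<bar> = 2 powr \<theta> * (2 powr \<theta>)^k"
        using pow2_powr[of "k+1" \<theta>] by simp
      finally show "(\<Sum>n\<in>G. (lam n)^2 * (cmod (r n))^2) \<le> M * 2 powr \<theta> * (2 powr \<theta>)^k"
        by (simp add: mult.assoc)
    qed simp
    also have "\<dots> = M * 2 powr \<theta> * (real k + 3) * q^k"
      by (simp add: q_def power_divide)
    also have "\<dots> \<le> M * 2 powr \<theta> * (real k + 3)^2 * q^k"
    proof -
      have "real k + 3 \<le> (real k + 3)^2" by (simp add: power2_eq_square)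
      then show ?thesis using M q0 by (intro mult_right_mono mult_left_mono) auto
    qed
    finally show "(\<Sum>n\<in>{n\<in>F. 2^k \<le> lam n \<and> lam n < 2^(k+1)}. (cmod (r n))^2 * (1 + ln (1 + lam n)))
        \<le> M * 2 powr \<theta> * (real k + 3)^2 * q^k" unfolding G_def .
  qed
qed


lemma aux_rearr: "(2::real)^(k+1) * X * (a * b * p^k) = 2 * a * (X * b) * (2*p)^k"
  by (simp add: power_mult_distrib mult_ac)

lemma case_a_summable:
  fixes lam :: "nat \<Rightarrow> real" and r :: "nat \<Rightarrow> complex"
  assumes pos: "\<And>n. lam n > 0" and lim: "filterlim lam at_top sequentially"
    and cnt: "\<exists>M>0. \<forall>\<^sub>F T in at_top. real (card {n. T < lam n \<and> lam n \<le> T + 1}) \<le> M * \<bar>ln T\<bar>"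
    and be: "\<beta> > 1/2"
    and rb: "\<exists>M>0. \<forall>\<^sub>F n in sequentially. cmod (r n) \<le> M * \<bar>lam n powr (-\<beta>)\<bar>"
  shows "summable (\<lambda>n. (cmod (r n))^2 * (1 + ln (1 + lam n)))"
proof -
  obtain N0 Mc where N0: "0 \<le> N0" and Mc: "0 \<le> Mc"
    and cu: "\<And>j::nat. real (card {n. real j < lam n \<and> lam n \<le> real j + 1}) \<le> N0 + Mc * ln (real j + 1)"
    using count_unit[OF lim cnt] by blast
  obtain M1 n0 where M1: "M1 > 0" and n0: "\<And>n. n \<ge> n0 \<Longrightarrow> cmod (r n) \<le> M1 * \<bar>lam n powr (-\<beta>)\<bar>"
    using rb by (auto simp: eventually_sequentially)
  obtain K0 where K0: "(\<Sum>m<n0. lam m) < 2^K0" using real_arch_pow[of 2 "\<Sum>m<n0. lam m"] by auto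
  have small: "lam m < 2^K0" if "m < n0" for m
  proof -
    have "lam m \<le> (\<Sum>m<n0. lam m)"
      by (rule member_le_sum) (use that pos less_imp_le in auto)
    then show ?thesis using K0 by linarith
  qed
  define q where "q = 2 powr (1 - 2*\<beta>)"
  have q0: "0 \<le> q" by (simp add: q_def)
  have q1: "q < 1"
  proof -
    have "2 powr (1 - 2*\<beta>) < 2 powr (0::real)" using be by (intro powr_less_mono) auto
    then show ?thesis by (simp add: q_def)
  qed
  have qq: "2 * 2 powr (-2*\<beta>) = q"
    by (simp add: q_def powr_add[symmetric] powr_diff powr_minus divide_inverse)
  define C where "C = 2 * M1^2 * (N0 + Mc)"
  show ?thesis
  proof (rule dyadic_summable[OF lim _ q0 q1, of _ C K0])
    show "0 \<le> C" using N0 Mc by (simp add: C_def)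
    show "0 \<le> (cmod (r n))^2 * (1 + ln (1 + lam n))" for n using pos[of n] by simp
    fix k :: nat and F :: "nat set" assume k: "K0 \<le> k" and F: "finite F"
    define G where "G = {n\<in>F. 2^k \<le> lam n \<and> lam n < 2^(k+1)}"
    have finG: "finite G" using F by (simp add: G_def)
    define B where "B = M1^2 * (real k + 3) * (2 powr (-2*\<beta>))^k"
    have pw: "(cmod (r n))^2 * (1 + ln (1 + lam n)) \<le> B" if n: "n \<in> G" for n
    proof -
      have l: "2^k \<le> lam n" "lam n < 2^(k+1)" using n by (auto simp: G_def)
      have lp: "0 < lam n" by (rule pos)
      have "n \<ge> n0"
      proof (rule ccontr)
        assume "\<not> n \<ge> n0"
        then have "lam n < 2^K0" using small by simp
        moreover have "(2::real)^K0 \<le> 2^k" using k by (intro power_increasing) auto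
        ultimately show False using l by linarith
      qed
      then have rn: "cmod (r n) \<le> M1 * lam n powr (-\<beta>)" using n0 by simp
      have "(cmod (r n))^2 \<le> (M1 * lam n powr (-\<beta>))^2"
        by (intro power_mono rn) simp
      also have "\<dots> = M1^2 * lam n powr (-2*\<beta>)"
        using lp by (simp add: power_mult_distrib powr_power)
      also have "\<dots> \<le> M1^2 * (2^k) powr (-2*\<beta>)"
        using be l lp by (intro mult_left_mono powr_mono2') auto
      also have "\<dots> = M1^2 * (2 powr (-2*\<beta>))^k" by (simp add: pow2_powr)
      finally have a: "(cmod (r n))^2 \<le> M1^2 * (2 powr (-2*\<beta>))^k" .
      have b: "1 + ln (1 + lam n) \<le> real k + 3" by (rule log_factor_bound[OF lp l(2)])
      have "(cmod (r n))^2 * (1 + ln (1 + lam n)) \<le> (M1^2 * (2 powr (-2*\<beta>))^k) * (real k + 3)"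
        using a b lp by (intro mult_mono) auto
      then show ?thesis by (simp add: B_def mult_ac)
    qed
    have cardG: "real (card G) \<le> 2^(k+1) * (N0 + Mc * (real k + 1))"
    proof -
      define jn where "jn n = nat (\<lceil>lam n\<rceil> - 1)" for n
      have jn1: "real (jn n) < lam n" and jn2: "lam n \<le> real (jn n) + 1" for n
      proof -
        have "\<lceil>lam n\<rceil> \<ge> 1" using pos[of n] by (simp add: one_le_ceiling)
        then have e: "real (jn n) = real_of_int \<lceil>lam n\<rceil> - 1" by (simp add: jn_def)
        show "real (jn n) < lam n" unfolding e by linarith
        show "lam n \<le> real (jn n) + 1" unfolding e by linarith
      qed
      define U where "U = (\<Union>j\<in>{..<2^(k+1)}. {n. real j < lam n \<and> lam n \<le> real j + 1})"
      have GU: "G \<subseteq> U"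
      proof
        fix n assume n: "n \<in> G"
        have "real (jn n) < 2^(k+1)" using jn1[of n] n by (auto simp: G_def)
        then have "jn n < 2^(k+1)"
          by (metis of_nat_less_iff of_nat_numeral of_nat_power)
        then show "n \<in> U" unfolding U_def using jn1[of n] jn2[of n] by blast
      qed
      have finU: "finite U" unfolding U_def
      proof (intro finite_UN_I)
        fix j assume "j \<in> {..<(2::nat)^(k+1)}"
        show "finite {n. real j < lam n \<and> lam n \<le> real j + 1}"
          by (rule finite_subset[OF _ finite_lam_le[OF lim, of "real j + 1"]]) auto
      qed simp
      have "card G \<le> card U" by (rule card_mono[OF finU GU])
      also have "card U \<le> (\<Sum>j<2^(k+1). card {n. real j < lam n \<and> lam n \<le> real j + 1})"
        unfolding U_def by (rule card_UN_le) simp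
      finally have "real (card G) \<le> (\<Sum>j<2^(k+1). real (card {n. real j < lam n \<and> lam n \<le> real j + 1}))"
        unfolding of_nat_sum[symmetric] of_nat_le_iff .
      also have "\<dots> \<le> (\<Sum>j<(2::nat)^(k+1). N0 + Mc * (real k + 1))"
      proof (rule sum_mono)
        fix j assume j: "j \<in> {..<(2::nat)^(k+1)}"
        have "real j + 1 \<le> 2^(k+1)"
        proof -
          have "j + 1 \<le> 2^(k+1)" using j by simp
          then have "real (j + 1) \<le> real ((2::nat)^(k+1))" by (simp only: of_nat_le_iff)
          then show ?thesis by simp
        qed
        then have "ln (real j + 1) \<le> ln (2^(k+1))" by simp
        also have "\<dots> = real (k+1) * ln 2" by (rule ln_realpow)
        also have "\<dots> \<le> real (k+1) * 1" using ln_2_less_1 by (intro mult_left_mono) auto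
        finally have "ln (real j + 1) \<le> real k + 1" by simp
        then have "N0 + Mc * ln (real j + 1) \<le> N0 + Mc * (real k + 1)"
          using Mc by (simp add: mult_left_mono)
        then show "real (card {n. real j < lam n \<and> lam n \<le> real j + 1}) \<le> N0 + Mc * (real k + 1)"
          using cu[of j] by linarith
      qed
      also have "\<dots> = 2^(k+1) * (N0 + Mc * (real k + 1))" by simp
      finally show ?thesis .
    qed
    have "(\<Sum>n\<in>G. (cmod (r n))^2 * (1 + ln (1 + lam n))) \<le> real (card G) * B"
      using sum_bounded_above[of G "\<lambda>n. (cmod (r n))^2 * (1 + ln (1 + lam n))" B] pw by simp
    also have "\<dots> \<le> (2^(k+1) * (N0 + Mc * (real k + 1))) * B"
      by (intro mult_right_mono cardG) (simp add: B_def)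
    also have "\<dots> = 2 * M1^2 * ((N0 + Mc * (real k + 1)) * (real k + 3)) * (2 * 2 powr (-2*\<beta>))^k"
      unfolding B_def by (rule aux_rearr)
    also have "\<dots> \<le> 2 * M1^2 * ((N0 + Mc) * (real k + 3)^2) * q^k"
    proof -
      have "(N0 + Mc * (real k + 1)) * (real k + 3) \<le> ((N0 + Mc) * (real k + 3)) * (real k + 3)"
      proof (rule mult_right_mono)
        have "(N0 + Mc) * (real k + 3) = N0 + Mc * (real k + 1) + (N0 * (real k + 2) + 2 * Mc)"
          by (simp add: algebra_simps)
        moreover have "0 \<le> N0 * (real k + 2) + 2 * Mc" using N0 Mc by simp
        ultimately show "N0 + Mc * (real k + 1) \<le> (N0 + Mc) * (real k + 3)" by linarith
      qed simp
      also have "\<dots> \<le> (N0 + Mc) * (real k + 3)^2" by (simp add: power2_eq_square mult.assoc)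
      finally show ?thesis unfolding qq using q0 by (intro mult_right_mono mult_left_mono) auto
    qed
    finally show "(\<Sum>n\<in>{n\<in>F. 2^k \<le> lam n \<and> lam n < 2^(k+1)}. (cmod (r n))^2 * (1 + ln (1 + lam n)))
        \<le> C * (real k + 3)^2 * q^k" unfolding G_def C_def by (simp add: mult_ac)
  qed
qed



lemma sum_shift_range:
  fixes g :: "nat \<Rightarrow> complex"
  shows "(\<Sum>n\<in>{a+1..a+K}. g n) = (\<Sum>k<K. g (k + a + 1))"
proof -
  have "{a+1..a+K} = (\<lambda>k. k + a + 1) ` {..<K}"
  proof (rule set_eqI, rule iffI)
    fix x assume x: "x \<in> {a+1..a+K}"
    then have "x = (x - a - 1) + a + 1" "x - a - 1 \<in> {..<K}" by auto
    then show "x \<in> (\<lambda>k. k + a + 1) ` {..<K}" by (rule image_eqI)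
  qed auto
  then show ?thesis by (simp add: sum.reindex inj_on_def)
qed

lemma trig_poly_rep:
  fixes F1 :: "nat set" and c :: real
  assumes "finite F1"
  shows "\<exists>N a mu. \<forall>y. trig_poly N a mu y = complex_of_real (c + Re (Sf F1 r lam y))"
proof -
  obtain K where K: "F1 \<subseteq> {..<K}" using assms finite_nat_bounded by blast
  define a where "a n = (if n = 1 then complex_of_real c else if n \<le> K+1 then
      (if n-2 \<in> F1 then r (n-2)/2 else 0) else (if n-K-2 \<in> F1 then cnj (r (n-K-2))/2 else 0))" for n
  define mu where "mu n = (if n = 1 then 0 else if n \<le> K+1 then lam (n-2) else - lam (n-K-2))" for n
  have e: "{1..2*K+1} = {1} \<union> {1+1..1+K} \<union> {(K+1)+1..(K+1)+K}" by auto
  show ?thesis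
  proof (intro exI allI)
    fix y
    define g where "g n = a n * exp (\<i> * complex_of_real (mu n * y))" for n
    have "trig_poly (2*K+1) a mu y = (\<Sum>n\<in>{1..2*K+1}. g n)" by (simp add: trig_poly_def g_def)
    also have "\<dots> = g 1 + (\<Sum>n\<in>{1+1..1+K}. g n) + (\<Sum>n\<in>{(K+1)+1..(K+1)+K}. g n)"
      unfolding e by (subst sum.union_disjoint, simp, simp, fastforce)+ simp
    also have "(\<Sum>n\<in>{1+1..1+K}. g n) = (\<Sum>k<K. g (k + 1 + 1))" by (rule sum_shift_range)
    also have "\<dots> = (\<Sum>k<K. if k \<in> F1 then r k / 2 * exp (\<i> * complex_of_real (lam k * y)) else 0)"
      by (intro sum.cong refl) (simp add: g_def a_def mu_def)
    also have "\<dots> = (\<Sum>k\<in>F1. r k / 2 * exp (\<i> * complex_of_real (lam k * y)))"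
      using K by (simp add: sum.If_cases Int_absorb1)
    also have "\<dots> = Sf F1 r lam y / 2" by (simp add: Sf_def sum_divide_distrib)
    also have "(\<Sum>n\<in>{(K+1)+1..(K+1)+K}. g n) = (\<Sum>k<K. g (k + (K+1) + 1))" by (rule sum_shift_range)
    also have "\<dots> = (\<Sum>k<K. if k \<in> F1 then cnj (r k) / 2 * exp (- (\<i> * complex_of_real (lam k * y))) else 0)"
      by (intro sum.cong refl) (simp add: g_def a_def mu_def)
    also have "\<dots> = (\<Sum>k\<in>F1. cnj (r k) / 2 * exp (- (\<i> * complex_of_real (lam k * y))))"
      using K by (simp add: sum.If_cases Int_absorb1)
    also have "\<dots> = cnj (Sf F1 r lam y) / 2" by (simp add: Sf_def sum_divide_distrib exp_cnj)
    also have "g 1 = complex_of_real c" by (simp add: g_def a_def mu_def)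
    finally show "trig_poly (2*K+1) a mu y = complex_of_real (c + Re (Sf F1 r lam y))"
      using complex_add_cnj[of "Sf F1 r lam y"] by (simp add: add_divide_distrib[symmetric] add.assoc)
  qed
qed


lemma Sf_borel[measurable]: "Sf F r lam \<in> borel_measurable borel"
  by (intro borel_measurable_continuous_onI continuous_Sf)

lemma Sf_union: "finite A \<Longrightarrow> finite B \<Longrightarrow> A \<inter> B = {} \<Longrightarrow> Sf (A \<union> B) r lam y = Sf A r lam y + Sf B r lam y"
  unfolding Sf_def by (rule sum.union_disjoint)

lemma tail_est:
  assumes D: "\<forall>x>0. \<forall>F. finite F \<longrightarrow> (\<Sum>n\<in>F. 1/(1+(x - lam n)^2)) \<le> D*(1+ln(1+x))"
    and pos: "\<And>n. lam n > 0" and F: "finite F" and Y: "1 \<le> Y"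
  shows "integral {0..Y} (\<lambda>y. (cmod (Sf F r lam y))^2) \<le>
      16 * Y * D * (\<Sum>m\<in>F. (cmod (r m))^2 * (1 + ln (1 + lam m)))"
proof -
  have "integral {0..Y} (\<lambda>y. (cmod (Sf F r lam y))^2) \<le>
     8*(Y+1) * (\<Sum>m\<in>F. (cmod (r m))^2 * (\<Sum>n\<in>F. 1/(1+(lam m - lam n)^2)))"
    using MV[OF F] Y by simp
  also have "\<dots> \<le> 8*(Y+1) * (\<Sum>m\<in>F. (cmod (r m))^2 * (D*(1+ln(1+lam m))))"
    using D pos F Y by (intro mult_left_mono sum_mono) auto
  also have "\<dots> \<le> 16 * Y * (\<Sum>m\<in>F. (cmod (r m))^2 * (D*(1+ln(1+lam m))))"
  proof (rule mult_right_mono)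
    show "0 \<le> (\<Sum>m\<in>F. (cmod (r m))^2 * (D*(1+ln(1+lam m))))"
    proof (intro sum_nonneg)
      fix m
      have "0 \<le> (\<Sum>n\<in>{m}. 1/(1+(lam m - lam n)^2))" by simp
      also have "\<dots> \<le> D*(1+ln(1+lam m))" using D pos[of m] by blast
      finally show "0 \<le> (cmod (r m))^2 * (D*(1+ln(1+lam m)))" by simp
    qed
  qed (use Y in auto)
  also have "\<dots> = 16 * Y * D * (\<Sum>m\<in>F. (cmod (r m))^2 * (1 + ln (1 + lam m)))"
    by (simp add: sum_distrib_left mult_ac)
  finally show ?thesis .
qed



lemma B2_part:
  fixes \<phi> :: "real \<Rightarrow> real" and y0 c X0 :: real
    and lam :: "nat \<Rightarrow> real" and r :: "nat \<Rightarrow> complex"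
    and E :: "real \<Rightarrow> real \<Rightarrow> real"
  assumes meas: "set_borel_measurable lborel {0..} \<phi>"
    and y0: "y0 \<ge> 0"
    and sqint: "set_integrable lborel {0..y0} (\<lambda>y. (\<phi> y)^2)"
    and lam_pos: "\<And>n. lam n > 0"
    and lam_lim: "filterlim lam at_top sequentially"
    and X0: "X0 > 0"
    and expansion: "\<And>y X. y \<ge> y0 \<Longrightarrow> X \<ge> X0 \<Longrightarrow>
        \<phi> y = c + Re (\<Sum>n\<in>{n. lam n \<le> X}. r n * exp (\<i> * complex_of_real (lam n * y))) + E y X"
    and err: "((\<lambda>Y. ennreal (1 / Y) *
          (\<integral>\<^sup>+ y\<in>{y0..Y}. ennreal ((E y (exp Y))^2) \<partial>lborel)) \<longlongrightarrow> 0) at_top"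
    and D0: "D \<ge> 0"
    and D: "\<forall>x>0. \<forall>F. finite F \<longrightarrow> (\<Sum>n\<in>F. 1/(1+(x - lam n)^2)) \<le> D*(1+ln(1+x))"
    and summ: "summable (\<lambda>n. (cmod (r n))^2 * (1 + ln (1 + lam n)))"
  shows "B2_almost_periodic \<phi>"
  unfolding B2_almost_periodic_def
proof (intro allI impI)
  fix \<epsilon> :: real assume \<epsilon>: "\<epsilon> > 0"
  define W where "W n = (cmod (r n))^2 * (1 + ln (1 + lam n))" for n
  have W0: "0 \<le> W n" for n using lam_pos[of n] by (simp add: W_def)
  define \<eta> where "\<eta> = \<epsilon>^2 / (64 * (D + 1))"
  have \<eta>: "\<eta> > 0" using \<epsilon> D0 by (simp add: \<eta>_def)
  obtain N where N: "norm (\<Sum>i. W (i + N)) < \<eta>"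
    using suminf_exist_split[OF \<eta> summ[folded W_def]] by blast
  define X1 where "X1 = max X0 (\<Sum>n<N. lam n)"
  have X1: "X1 \<ge> X0" "X1 > 0" using X0 by (auto simp: X1_def)
  have bigN: "n \<ge> N" if "lam n > X1" for n
  proof (rule ccontr)
    assume "\<not> n \<ge> N"
    then have "lam n \<le> (\<Sum>n<N. lam n)"
      by (intro member_le_sum) (use lam_pos less_imp_le in auto)
    then show False using that by (simp add: X1_def)
  qed
  have tailH: "(\<Sum>n\<in>H. W n) \<le> \<eta>" if H: "finite H" "\<And>n. n \<in> H \<Longrightarrow> lam n > X1" for H
  proof -
    have sW: "summable (\<lambda>i. W (i + N))"
      using summ[folded W_def] by (rule summable_ignore_initial_segment)
    have HN: "\<And>n. n \<in> H \<Longrightarrow> N \<le> n" using H bigN by blast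
    have inj: "inj_on (\<lambda>n. n - N) H" by (rule inj_onI) (metis HN le_add_diff_inverse2)
    have "(\<Sum>n\<in>H. W n) = (\<Sum>n\<in>H. W (n - N + N))" using HN by (intro sum.cong) auto
    also have "\<dots> = (\<Sum>i\<in>(\<lambda>n. n - N) ` H. W (i + N))"
      by (rule sum.reindex[OF inj, unfolded o_def, symmetric])
    also have "\<dots> \<le> (\<Sum>i. W (i + N))"
      by (rule sum_le_suminf[OF sW]) (use H W0 in auto)
    also have "\<dots> \<le> \<eta>" using N W0 suminf_nonneg[OF sW] by simp
    finally show ?thesis .
  qed
  define F1 where "F1 = {n. lam n \<le> X1}"
  have finF1: "finite F1" unfolding F1_def by (rule finite_lam_le[OF lam_lim])
  define p where "p y = c + Re (Sf F1 r lam y)" for y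
  obtain NN a mu where tp: "\<And>y. trig_poly NN a mu y = complex_of_real (p y)"
    using trig_poly_rep[OF finF1, of c r lam] unfolding p_def by blast
  show "\<exists>N a mu. (\<forall>y. Im (trig_poly N a mu y) = 0) \<and>
          Limsup at_top (\<lambda>Y::real. ennreal (1 / Y) *
           (\<integral>\<^sup>+ y\<in>{0..Y}. ennreal ((cmod (complex_of_real (\<phi> y) - trig_poly N a mu y))^2) \<partial>lborel))
          < ennreal (\<epsilon>^2)"
  proof (intro exI conjI allI)
    show "Im (trig_poly NN a mu y) = 0" for y by (simp add: tp)
    show "Limsup at_top (\<lambda>Y::real. ennreal (1 / Y) *
           (\<integral>\<^sup>+ y\<in>{0..Y}. ennreal ((cmod (complex_of_real (\<phi> y) - trig_poly NN a mu y))^2) \<partial>lborel))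
          < ennreal (\<epsilon>^2)"
    proof -
      define \<phi>0 where "\<phi>0 y = indicator {0..} y * \<phi> y" for y
      have \<phi>0m[measurable]: "\<phi>0 \<in> borel_measurable lborel"
        using meas unfolding \<phi>0_def[abs_def] by (simp add: set_borel_measurable_def)
      have pm[measurable]: "p \<in> borel_measurable lborel" unfolding p_def by measurable
      define Q where "Q Y = ennreal (1 / Y) *
           (\<integral>\<^sup>+ y\<in>{0..Y}. ennreal ((cmod (complex_of_real (\<phi> y) - trig_poly NN a mu y))^2) \<partial>lborel)" for Y
      have Qeq: "Q Y = ennreal (1/Y) * (\<integral>\<^sup>+ y. ennreal ((\<phi>0 y - p y)^2) * indicator {0..Y} y \<partial>lborel)" for Y
        unfolding Q_def
      proof (intro arg_cong[where f="\<lambda>x. ennreal (1/Y) * x"] nn_integral_cong)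
        fix y
        show "ennreal ((cmod (complex_of_real (\<phi> y) - trig_poly NN a mu y))^2) * indicator {0..Y} y =
              ennreal ((\<phi>0 y - p y)^2) * indicator {0..Y} y"
        proof (cases "y \<in> {0..Y}")
          case True
          then have "\<phi>0 y = \<phi> y" by (simp add: \<phi>0_def)
          moreover have "cmod (complex_of_real (\<phi> y) - complex_of_real (p y)) = \<bar>\<phi> y - p y\<bar>"
            by (metis norm_of_real of_real_diff)
          ultimately show ?thesis by (simp add: tp)
        qed simp
      qed
      define A where "A = (\<integral>\<^sup>+ y. ennreal ((\<phi>0 y - p y)^2) * indicator {0..y0} y \<partial>lborel)"
      define Bp where "Bp = \<bar>c\<bar> + (\<Sum>n\<in>F1. cmod (r n))"
      have pB: "\<bar>p y\<bar> \<le> Bp" for y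
      proof -
        have "\<bar>Re (Sf F1 r lam y)\<bar> \<le> cmod (Sf F1 r lam y)" by (rule abs_Re_le_cmod)
        also have "\<dots> \<le> (\<Sum>n\<in>F1. cmod (r n * exp (\<i> * complex_of_real (lam n * y))))"
          unfolding Sf_def by (rule norm_sum)
        also have "\<dots> = (\<Sum>n\<in>F1. cmod (r n))" by (simp add: norm_mult cmod_exp_i)
        finally show ?thesis unfolding p_def Bp_def by linarith
      qed
      have Afin: "A < top"
      proof -
        have f1: "(\<integral>\<^sup>+ y. ennreal (norm (indicator {0..y0} y *\<^sub>R (\<phi> y)^2)) \<partial>lborel) < top"
          using integrableD(2)[OF sqint[unfolded set_integrable_def]] by (simp add: top.not_eq_extremum)
        have pw: "ennreal ((\<phi>0 y - p y)^2) * indicator {0..y0} y \<le>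
            2 * ennreal (norm (indicator {0..y0} y *\<^sub>R (\<phi> y)^2)) + ennreal (2 * Bp^2) * indicator {0..y0} y" for y
        proof (cases "y \<in> {0..y0}")
          case True
          then have e: "\<phi>0 y = \<phi> y" by (simp add: \<phi>0_def)
          have "(\<phi>0 y - p y)^2 \<le> 2 * (\<phi> y)^2 + 2 * (p y)^2"
            unfolding e using sum_squares_ge_zero[of "\<phi> y + p y" 0] by (simp add: power2_eq_square algebra_simps)
          also have "(p y)^2 \<le> Bp^2" using pB[of y] by (metis abs_ge_zero power2_abs power_mono)
          finally have "(\<phi>0 y - p y)^2 \<le> 2 * (\<phi> y)^2 + 2 * Bp^2" by simp
          then have "ennreal ((\<phi>0 y - p y)^2) \<le> ennreal (2 * (\<phi> y)^2) + ennreal (2 * Bp^2)"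
            by (simp add: ennreal_plus[symmetric] del: ennreal_plus)
          also have "ennreal (2 * (\<phi> y)^2) = 2 * ennreal ((\<phi> y)^2)" by (simp add: ennreal_mult)
          finally show ?thesis using True by simp
        qed simp
        have "A \<le> (\<integral>\<^sup>+ y. 2 * ennreal (norm (indicator {0..y0} y *\<^sub>R (\<phi> y)^2)) + ennreal (2 * Bp^2) * indicator {0..y0} y \<partial>lborel)"
          unfolding A_def by (rule nn_integral_mono) (rule pw)
        also have "\<dots> = 2 * (\<integral>\<^sup>+ y. ennreal (norm (indicator {0..y0} y *\<^sub>R (\<phi> y)^2)) \<partial>lborel) +
              ennreal (2 * Bp^2) * emeasure lborel {0..y0}"
        proof -
          have m: "(\<lambda>y. indicator {0..y0} y *\<^sub>R (\<phi> y)^2) \<in> borel_measurable lborel"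
            using sqint unfolding set_integrable_def by (rule borel_measurable_integrable)
          show ?thesis using m
            by (subst nn_integral_add) (auto simp: nn_integral_cmult nn_integral_cmult_indicator)
        qed
        also have "\<dots> < top" using f1 y0 by (simp add: ennreal_mult_less_top emeasure_lborel_Icc)
        finally show ?thesis .
      qed
      define Y1 where "Y1 = max (max 1 y0) (ln X1)"
      have main: "Q Y \<le> ennreal (1/Y) * A + ennreal (32 * D * \<eta>) +
           2 * (ennreal (1 / Y) * (\<integral>\<^sup>+ y\<in>{y0..Y}. ennreal ((E y (exp Y))^2) \<partial>lborel))"
        if Y: "Y \<ge> Y1" for Y
      proof -
        have Y1: "1 \<le> Y" "y0 \<le> Y" "ln X1 \<le> Y" using Y by (auto simp: Y1_def)
        have eX1: "X1 \<le> exp Y" using Y1(3) X1(2) by (metis exp_ln exp_le_cancel_iff)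
        have eX0: "X0 \<le> exp Y" using eX1 X1(1) by linarith
        define FY where "FY = {n. lam n \<le> exp Y}"
        define H where "H = {n. X1 < lam n \<and> lam n \<le> exp Y}"
        define e2 where "e2 y = (\<phi>0 y - c - Re (Sf FY r lam y))^2" for y
        have finFY: "finite FY" unfolding FY_def by (rule finite_lam_le[OF lam_lim])
        have finH: "finite H" by (rule finite_subset[OF _ finFY]) (auto simp: H_def FY_def)
        have FYeq: "FY = F1 \<union> H" "F1 \<inter> H = {}" using eX1 by (auto simp: FY_def H_def F1_def)
        have decomp: "\<phi>0 y - p y = Re (Sf H r lam y) + (\<phi>0 y - c - Re (Sf FY r lam y))" for y
          using Sf_union[OF finF1 finH FYeq(2), of r lam y] unfolding FYeq(1) p_def by simp
        have e2m[measurable]: "e2 \<in> borel_measurable lborel" unfolding e2_def by measurable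
        have sqb: "(\<phi>0 y - p y)^2 \<le> 2 * (cmod (Sf H r lam y))^2 + 2 * e2 y" for y
        proof -
          define u where "u = Re (Sf H r lam y)"
          define v where "v = \<phi>0 y - c - Re (Sf FY r lam y)"
          have "(\<phi>0 y - p y)^2 = (u + v)^2" unfolding u_def v_def decomp ..
          also have "\<dots> \<le> 2 * u^2 + 2 * v^2"
            using sum_squares_ge_zero[of "u - v" 0] by (simp add: power2_eq_square algebra_simps)
          also have "u^2 \<le> (cmod (Sf H r lam y))^2" unfolding u_def
            by (metis abs_Re_le_cmod abs_ge_zero power2_abs power_mono)
          finally show ?thesis by (simp add: e2_def v_def)
        qed
        have pw: "ennreal ((\<phi>0 y - p y)^2) * indicator {0..Y} y \<le>
            ennreal ((\<phi>0 y - p y)^2) * indicator {0..y0} y +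
            (ennreal (2 * (cmod (Sf H r lam y))^2) * indicator {0..Y} y + ennreal (2 * e2 y) * indicator {y0..Y} y)" for y
        proof (cases "y \<in> {0..y0}")
          case True
          have "ennreal ((\<phi>0 y - p y)^2) * indicator {0..Y} y \<le> ennreal ((\<phi>0 y - p y)^2) * indicator {0..y0} y"
            using True by (cases "y \<in> {0..Y}") auto
          then show ?thesis by (rule add_increasing2[rotated]) simp
        next
          case False
          show ?thesis
          proof (cases "y \<in> {0..Y}")
            case True
            then have "y \<in> {y0..Y}" using False by auto
            moreover have "ennreal ((\<phi>0 y - p y)^2) \<le> ennreal (2 * (cmod (Sf H r lam y))^2) + ennreal (2 * e2 y)"
              using sqb[of y] by (simp add: ennreal_plus[symmetric] e2_def del: ennreal_plus)
            ultimately show ?thesis using True False by simp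
          qed simp
        qed
        have T2: "(\<integral>\<^sup>+ y. ennreal (2 * (cmod (Sf H r lam y))^2) * indicator {0..Y} y \<partial>lborel) \<le> ennreal (32 * Y * D * \<eta>)"
        proof -
          have cont: "continuous_on {0..Y} (\<lambda>y. 2 * (cmod (Sf H r lam y))^2)"
            by (intro continuous_intros continuous_Sf)
          have "(\<integral>\<^sup>+ y. ennreal (2 * (cmod (Sf H r lam y))^2) * indicator {0..Y} y \<partial>lborel)
              = ennreal (integral {0..Y} (\<lambda>y. 2 * (cmod (Sf H r lam y))^2))"
            by (rule nn_integral_has_integral_lebesgue'[OF _ integrable_integral[OF integrable_continuous_interval[OF cont]]]) auto
          also have "\<dots> \<le> ennreal (32 * Y * D * \<eta>)"
          proof (rule ennreal_leI)
            have "integral {0..Y} (\<lambda>y. 2 * (cmod (Sf H r lam y))^2) = 2 * integral {0..Y} (\<lambda>y. (cmod (Sf H r lam y))^2)"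
              by (rule integral_mult_right)
            also have "\<dots> \<le> 2 * (16 * Y * D * (\<Sum>m\<in>H. W m))"
              using tail_est[OF D lam_pos finH Y1(1), of r] unfolding W_def by linarith
            also have "\<dots> \<le> 2 * (16 * Y * D * \<eta>)"
              using tailH[OF finH] Y1 D0 by (intro mult_left_mono) (auto simp: H_def)
            finally show "integral {0..Y} (\<lambda>y. 2 * (cmod (Sf H r lam y))^2) \<le> 32 * Y * D * \<eta>" by simp
          qed
          finally show ?thesis .
        qed
        define G where "G = (\<integral>\<^sup>+ y\<in>{y0..Y}. ennreal ((E y (exp Y))^2) \<partial>lborel)"
        have T3: "(\<integral>\<^sup>+ y. ennreal (2 * e2 y) * indicator {y0..Y} y \<partial>lborel) = 2 * G"
        proof -
          have "(\<integral>\<^sup>+ y. ennreal (2 * e2 y) * indicator {y0..Y} y \<partial>lborel) =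
                (\<integral>\<^sup>+ y. 2 * (ennreal (e2 y) * indicator {y0..Y} y) \<partial>lborel)"
            by (intro nn_integral_cong) (simp add: ennreal_mult e2_def mult.assoc)
          also have "\<dots> = 2 * (\<integral>\<^sup>+ y. ennreal (e2 y) * indicator {y0..Y} y \<partial>lborel)"
            by (rule nn_integral_cmult) measurable
          also have "(\<integral>\<^sup>+ y. ennreal (e2 y) * indicator {y0..Y} y \<partial>lborel) = G"
            unfolding G_def
          proof (intro nn_integral_cong)
            fix y
            show "ennreal (e2 y) * indicator {y0..Y} y = ennreal ((E y (exp Y))^2) * indicator {y0..Y} y"
            proof (cases "y \<in> {y0..Y}")
              case True
              then have "\<phi> y = c + Re (Sf FY r lam y) + E y (exp Y)"
                using expansion[of y "exp Y"] eX0 by (simp add: Sf_def FY_def)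
              moreover have "\<phi>0 y = \<phi> y" using True y0 by (simp add: \<phi>0_def)
              ultimately show ?thesis by (simp add: e2_def)
            qed simp
          qed
          finally show ?thesis .
        qed
        have "(\<integral>\<^sup>+ y. ennreal ((\<phi>0 y - p y)^2) * indicator {0..Y} y \<partial>lborel) \<le>
            (\<integral>\<^sup>+ y. ennreal ((\<phi>0 y - p y)^2) * indicator {0..y0} y +
            (ennreal (2 * (cmod (Sf H r lam y))^2) * indicator {0..Y} y + ennreal (2 * e2 y) * indicator {y0..Y} y) \<partial>lborel)"
          by (rule nn_integral_mono) (rule pw)
        also have "\<dots> = A + ((\<integral>\<^sup>+ y. ennreal (2 * (cmod (Sf H r lam y))^2) * indicator {0..Y} y \<partial>lborel) +
              (\<integral>\<^sup>+ y. ennreal (2 * e2 y) * indicator {y0..Y} y \<partial>lborel))"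
        proof -
          have m1: "(\<lambda>y. ennreal ((\<phi>0 y - p y)^2) * indicator {0..y0} y) \<in> borel_measurable lborel" by measurable
          have m2: "(\<lambda>y. ennreal (2 * (cmod (Sf H r lam y))^2) * indicator {0..Y} y) \<in> borel_measurable lborel" by measurable
          have m3: "(\<lambda>y. ennreal (2 * e2 y) * indicator {y0..Y} y) \<in> borel_measurable lborel" by measurable
          have m23: "(\<lambda>y. ennreal (2 * (cmod (Sf H r lam y))^2) * indicator {0..Y} y + ennreal (2 * e2 y) * indicator {y0..Y} y) \<in> borel_measurable lborel" by measurable
          show ?thesis unfolding A_def nn_integral_add[OF m1 m23] nn_integral_add[OF m2 m3] ..
        qed
        also have "\<dots> \<le> A + (ennreal (32 * Y * D * \<eta>) + 2 * G)"
          unfolding T3 using T2 by (intro add_mono order.refl)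
        finally have I: "(\<integral>\<^sup>+ y. ennreal ((\<phi>0 y - p y)^2) * indicator {0..Y} y \<partial>lborel) \<le>
            A + (ennreal (32 * Y * D * \<eta>) + 2 * G)" .
        have "Q Y \<le> ennreal (1/Y) * (A + (ennreal (32 * Y * D * \<eta>) + 2 * G))"
          unfolding Qeq by (intro mult_left_mono I) simp
        also have "\<dots> = ennreal (1/Y) * A + ennreal (1/Y) * ennreal (32 * Y * D * \<eta>) + 2 * (ennreal (1/Y) * G)"
          by (simp only: distrib_left add.assoc mult.left_commute[of "ennreal (1/Y)" 2])
        also have "ennreal (1/Y) * ennreal (32 * Y * D * \<eta>) = ennreal (32 * D * \<eta>)"
        proof -
          have "ennreal (1/Y) * ennreal (32 * Y * D * \<eta>) = ennreal (1/Y * (32 * Y * D * \<eta>))"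
            using Y1 D0 \<eta> by (subst ennreal_mult) auto
          also have "1/Y * (32 * Y * D * \<eta>) = 32 * D * \<eta>" using Y1 by simp
          finally show ?thesis .
        qed
        finally show ?thesis unfolding G_def .
      qed
      define R where "R Y = ennreal (1/Y) * A + ennreal (32 * D * \<eta>) +
           2 * (ennreal (1 / Y) * (\<integral>\<^sup>+ y\<in>{y0..Y}. ennreal ((E y (exp Y))^2) \<partial>lborel))" for Y
      have Rlim: "(R \<longlongrightarrow> ennreal (32 * D * \<eta>)) at_top"
      proof -
        have inv: "((\<lambda>Y::real. ennreal (1/Y)) \<longlongrightarrow> ennreal 0) at_top"
          by (intro tendsto_ennrealI) real_asymp
        have "((\<lambda>Y. A * ennreal (1/Y)) \<longlongrightarrow> A * ennreal 0) at_top"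
          by (rule ennreal_tendsto_cmult[OF Afin inv])
        then have t1: "((\<lambda>Y. ennreal (1/Y) * A) \<longlongrightarrow> 0) at_top" by (simp add: mult.commute)
        have t3: "((\<lambda>Y. 2 * (ennreal (1 / Y) * (\<integral>\<^sup>+ y\<in>{y0..Y}. ennreal ((E y (exp Y))^2) \<partial>lborel))) \<longlongrightarrow> 2 * 0) at_top"
          by (rule ennreal_tendsto_cmult[OF _ err]) simp
        have "(R \<longlongrightarrow> 0 + ennreal (32 * D * \<eta>) + 2 * 0) at_top"
          unfolding R_def by (intro tendsto_add t1 t3 tendsto_const)
        then show ?thesis by simp
      qed
      have "Limsup at_top Q \<le> Limsup at_top R"
        by (rule Limsup_mono) (use main in \<open>auto simp: R_def eventually_at_top_linorder\<close>)
      also have "Limsup at_top R = ennreal (32 * D * \<eta>)"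
        by (rule lim_imp_Limsup[OF _ Rlim]) simp
      also have "\<dots> < ennreal (\<epsilon>^2)"
      proof -
        have "32 * D * \<eta> = \<epsilon>^2 * (32 * D / (64 * (D + 1)))" by (simp add: \<eta>_def)
        also have "\<dots> < \<epsilon>^2 * 1"
          using \<epsilon> D0 by (intro mult_strict_left_mono) (auto simp: field_simps)
        finally show ?thesis using D0 \<eta> by (subst ennreal_less_iff) auto
      qed
      finally show ?thesis unfolding Q_def[abs_def] .
    qed
  qed
qed



definition es :: "(complex \<times> real) list \<Rightarrow> real \<Rightarrow> complex" where
  "es xs y = sum_list (map (\<lambda>(a,\<mu>). a * exp (\<i> * complex_of_real (\<mu>*y))) xs)"

definition prodl :: "(complex \<times> real) list \<Rightarrow> (complex \<times> real) list \<Rightarrow> (complex \<times> real) list" where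
  "prodl xs ys = concat (map (\<lambda>(a,\<mu>). map (\<lambda>(b,\<nu>). (a*b, \<mu>+\<nu>)) ys) xs)"

lemma es_Nil[simp]: "es [] y = 0" by (simp add: es_def)
lemma es_Cons[simp]: "es ((a,\<mu>)#xs) y = a * exp (\<i> * complex_of_real (\<mu>*y)) + es xs y"
  by (simp add: es_def)
lemma es_append[simp]: "es (xs @ ys) y = es xs y + es ys y" by (simp add: es_def)

lemma es_map_shift:
  "es (map (\<lambda>(b,\<nu>). (a*b, \<mu>+\<nu>)) ys) y = a * exp (\<i> * complex_of_real (\<mu>*y)) * es ys y"
proof (induction ys)
  case Nil then show ?case by simp
next
  case (Cons bn ys)
  obtain b \<nu> where bn: "bn = (b,\<nu>)" by fastforce
  have "exp (\<i> * complex_of_real ((\<mu> + \<nu>) * y)) = exp (\<i> * complex_of_real (\<mu>*y)) * exp (\<i> * complex_of_real (\<nu>*y))"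
    by (simp add: exp_add[symmetric] algebra_simps)
  then show ?case using Cons by (simp add: bn algebra_simps)
qed

lemma es_prodl: "es (prodl xs ys) y = es xs y * es ys y"
proof (induction xs)
  case Nil then show ?case by (simp add: prodl_def)
next
  case (Cons an xs)
  obtain a \<mu> where an: "an = (a,\<mu>)" by fastforce
  have "prodl (an # xs) ys = map (\<lambda>(b,\<nu>). (a*b, \<mu>+\<nu>)) ys @ prodl xs ys"
    by (simp add: prodl_def an)
  then have "es (prodl (an # xs) ys) y = a * exp (\<i> * complex_of_real (\<mu>*y)) * es ys y + es xs y * es ys y"
    by (simp only: es_append es_map_shift Cons)
  then show ?case by (simp add: an algebra_simps)
qed

definition ES :: "(real \<Rightarrow> complex) \<Rightarrow> bool" where
  "ES F \<longleftrightarrow> (\<exists>xs. \<forall>y. F y = es xs y)"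

lemma ES_const: "ES (\<lambda>y. c)"
  unfolding ES_def by (rule exI[of _ "[(c,0)]"]) simp

lemma ES_add: "ES F \<Longrightarrow> ES G \<Longrightarrow> ES (\<lambda>y. F y + G y)"
  unfolding ES_def by (metis es_append)

lemma ES_mult: "ES F \<Longrightarrow> ES G \<Longrightarrow> ES (\<lambda>y. F y * G y)"
  unfolding ES_def by (metis es_prodl)

lemma ES_trig: "ES (trig_poly N a mu)"
proof -
  have "trig_poly N a mu y = es (map (\<lambda>n. (a n, mu n)) [1..<Suc N]) y" for y
  proof -
    have "trig_poly N a mu y = (\<Sum>n\<in>set [1..<Suc N]. a n * exp (\<i> * complex_of_real (mu n * y)))"
      by (simp only: trig_poly_def set_upt atLeastLessThanSuc_atLeastAtMost)
    also have "\<dots> = sum_list (map (\<lambda>n. a n * exp (\<i> * complex_of_real (mu n * y))) [1..<Suc N])"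
      by (rule sum_set_upt_conv_sum_list_nat)
    finally show ?thesis by (simp add: es_def o_def)
  qed
  then show ?thesis unfolding ES_def by blast
qed

lemma ES_poly:
  assumes "real_polynomial_function h" and "ES (\<lambda>y. complex_of_real (p y))"
  shows "ES (\<lambda>y. complex_of_real (h (p y)))"
  using assms(1)
proof induction
  case (linear f)
  then obtain c where c: "f = (\<lambda>x. x * c)" by (auto simp: real_bounded_linear)
  show ?case unfolding c using ES_mult[OF assms(2) ES_const[of "complex_of_real c"]] by simp
next
  case (const c) then show ?case by (simp add: ES_const)
next
  case (add f g) then show ?case using ES_add by fastforce
next
  case (mult f g) then show ?case using ES_mult by fastforce
qed

lemma EI_mean: "((\<lambda>Y. complex_of_real (1/Y) * EI \<mu> 0 Y) \<longlongrightarrow> (if \<mu> = 0 then 1 else 0)) at_top"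
proof (cases "\<mu> = 0")
  case True
  have "\<forall>\<^sub>F Y in at_top. complex_of_real (1/Y) * EI \<mu> 0 Y = 1"
    using eventually_gt_at_top[of "0::real"]
    by eventually_elim (simp add: True EI_def of_real_mult[symmetric] del: of_real_mult)
  then show ?thesis using True by (simp add: tendsto_eventually)
next
  case False
  have "((\<lambda>Y. complex_of_real (1/Y) * EI \<mu> 0 Y) \<longlongrightarrow> 0) at_top"
  proof (rule Lim_null_comparison)
    show "\<forall>\<^sub>F Y in at_top. norm (complex_of_real (1/Y) * EI \<mu> 0 Y) \<le> (1/Y) * (2/\<bar>\<mu>\<bar>)"
      using eventually_gt_at_top[of "0::real"]
    proof eventually_elim
      case (elim Y)
      have "norm (complex_of_real (1/Y) * EI \<mu> 0 Y) = (1/Y) * cmod (EI \<mu> 0 Y)"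
        using elim by (simp add: norm_mult norm_divide)
      also have "\<dots> \<le> (1/Y) * (2/\<bar>\<mu>\<bar>)"
        using EI_bound2[OF False, of 0 Y] elim by (intro mult_left_mono) auto
      finally show ?case .
    qed
    show "((\<lambda>Y. (1/Y) * (2/\<bar>\<mu>\<bar>)) \<longlongrightarrow> 0) at_top" by real_asymp
  qed
  then show ?thesis using False by simp
qed

lemma es_has_integral: "0 \<le> Y \<Longrightarrow> (es xs has_integral (\<Sum>(a,\<mu>)\<leftarrow>xs. a * EI \<mu> 0 Y)) {0..Y}"
proof (induction xs)
  case Nil then show ?case by (simp add: es_def[abs_def])
next
  case (Cons an xs)
  obtain a \<mu> where an: "an = (a,\<mu>)" by fastforce
  have "((\<lambda>y. a * exp (\<i> * complex_of_real (\<mu>*y)) + es xs y) has_integral (a * EI \<mu> 0 Y + (\<Sum>(a,\<mu>)\<leftarrow>xs. a * EI \<mu> 0 Y))) {0..Y}"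
    by (intro has_integral_add has_integral_mult_right EI_int Cons)
  then show ?case by (simp add: an)
qed

lemma es_mean: "\<exists>L. ((\<lambda>Y. complex_of_real (1/Y) * integral {0..Y} (es xs)) \<longlongrightarrow> L) at_top"
proof -
  have lim: "((\<lambda>Y. complex_of_real (1/Y) * (\<Sum>(a,\<mu>)\<leftarrow>xs. a * EI \<mu> 0 Y)) \<longlongrightarrow>
      (\<Sum>(a,\<mu>)\<leftarrow>xs. a * (if \<mu> = 0 then 1 else 0))) at_top"
  proof (induction xs)
    case Nil then show ?case by simp
  next
    case (Cons an xs)
    obtain a \<mu> where an: "an = (a,\<mu>)" by fastforce
    have "((\<lambda>Y. a * (complex_of_real (1/Y) * EI \<mu> 0 Y) + complex_of_real (1/Y) * (\<Sum>(a,\<mu>)\<leftarrow>xs. a * EI \<mu> 0 Y)) \<longlongrightarrow>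
        a * (if \<mu> = 0 then 1 else 0) + (\<Sum>(a,\<mu>)\<leftarrow>xs. a * (if \<mu> = 0 then 1 else 0))) at_top"
      by (intro tendsto_add tendsto_mult tendsto_const EI_mean Cons)
    then show ?case by (simp add: an algebra_simps)
  qed
  have "\<forall>\<^sub>F Y in at_top. complex_of_real (1/Y) * (\<Sum>(a,\<mu>)\<leftarrow>xs. a * EI \<mu> 0 Y) =
      complex_of_real (1/Y) * integral {0..Y} (es xs)"
    using eventually_ge_at_top[of "0::real"]
    by eventually_elim (simp add: integral_unique[OF es_has_integral])
  from tendsto_cong[OF this] lim show ?thesis by blast
qed

lemma ES_mean: "ES F \<Longrightarrow> \<exists>L. ((\<lambda>Y. complex_of_real (1/Y) * integral {0..Y} F) \<longlongrightarrow> L) at_top"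
proof -
  assume "ES F"
  then obtain xs where "\<And>y. F y = es xs y" by (auto simp: ES_def)
  then have "F = es xs" by auto
  then show ?thesis using es_mean by simp
qed

lemma ES_real_mean:
  assumes "ES (\<lambda>y. complex_of_real (g y))" and "continuous_on UNIV g"
  shows "\<exists>L. ((\<lambda>Y. (1/Y) * integral {0..Y} g) \<longlongrightarrow> L) at_top"
proof -
  obtain L where L: "((\<lambda>Y. complex_of_real (1/Y) * integral {0..Y} (\<lambda>y. complex_of_real (g y))) \<longlongrightarrow> L) at_top"
    using ES_mean[OF assms(1)] by blast
  have "\<forall>\<^sub>F Y in at_top. Re (complex_of_real (1/Y) * integral {0..Y} (\<lambda>y. complex_of_real (g y))) = (1/Y) * integral {0..Y} g"
  proof (rule always_eventually, rule allI)
    fix Y :: real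
    have "g integrable_on {0..Y}"
      by (rule integrable_continuous_interval) (use assms(2) continuous_on_subset in blast)
    then have "integral {0..Y} (\<lambda>y. complex_of_real (g y)) = complex_of_real (integral {0..Y} g)"
      by (intro integral_unique has_integral_of_real integrable_integral)
    then show "Re (complex_of_real (1/Y) * integral {0..Y} (\<lambda>y. complex_of_real (g y))) = (1/Y) * integral {0..Y} g"
      by simp
  qed
  from tendsto_cong[OF this] tendsto_Re[OF L] show ?thesis by blast
qed



lemma approx_conv:
  fixes m :: "real \<Rightarrow> real"
  assumes approx: "\<And>\<epsilon>. \<epsilon> > 0 \<Longrightarrow> \<exists>q L. (q \<longlongrightarrow> L) at_top \<and> (\<forall>\<^sub>F Y in at_top. \<bar>m Y - q Y\<bar> \<le> \<epsilon>)"
  shows "\<exists>L. (m \<longlongrightarrow> L) at_top"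
proof -
  have "\<forall>k::nat. \<exists>qL. ((fst qL) \<longlongrightarrow> snd qL) at_top \<and> (\<forall>\<^sub>F Y in at_top. \<bar>m Y - fst qL Y\<bar> \<le> 1 / Suc k)"
  proof
    fix k :: nat
    obtain q L where "(q \<longlongrightarrow> L) at_top" "\<forall>\<^sub>F Y in at_top. \<bar>m Y - q Y\<bar> \<le> 1 / Suc k"
      using approx[of "1 / Suc k"] by auto
    then show "\<exists>qL. ((fst qL) \<longlongrightarrow> snd qL) at_top \<and> (\<forall>\<^sub>F Y in at_top. \<bar>m Y - fst qL Y\<bar> \<le> 1 / Suc k)"
      by (intro exI[of _ "(q,L)"]) auto
  qed
  then obtain QL where QL: "\<And>k. ((fst (QL k)) \<longlongrightarrow> snd (QL k)) at_top"
      "\<And>k. \<forall>\<^sub>F Y in at_top. \<bar>m Y - fst (QL k) Y\<bar> \<le> 1 / Suc k"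
    by metis
  define Q where "Q k = fst (QL k)" for k
  define LL where "LL k = snd (QL k)" for k
  have Qt: "(Q k \<longlongrightarrow> LL k) at_top" for k using QL(1) by (simp add: Q_def LL_def)
  have Qe: "\<forall>\<^sub>F Y in at_top. \<bar>m Y - Q k Y\<bar> \<le> 1 / Suc k" for k using QL(2) by (simp add: Q_def)
  have dist: "\<bar>LL k - LL j\<bar> \<le> 1 / Suc k + 1 / Suc j" for k j
  proof (rule tendsto_upperbound)
    show "((\<lambda>Y. \<bar>Q k Y - Q j Y\<bar>) \<longlongrightarrow> \<bar>LL k - LL j\<bar>) at_top"
      by (intro tendsto_intros Qt)
    show "\<forall>\<^sub>F Y in at_top. \<bar>Q k Y - Q j Y\<bar> \<le> 1 / Suc k + 1 / Suc j"
      using Qe[of k] Qe[of j] by eventually_elim linarith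
  qed simp
  have "Cauchy LL"
  proof (rule metric_CauchyI)
    fix e :: real assume e: "e > 0"
    obtain M :: nat where M: "2 / e < M" using reals_Archimedean2 by blast
    have "2 / Suc M < e" using M e by (simp add: field_simps)
    show "\<exists>M. \<forall>m\<ge>M. \<forall>n\<ge>M. dist (LL m) (LL n) < e"
    proof (intro exI allI impI)
      fix k j assume k: "k \<ge> M" and j: "j \<ge> M"
      have "1 / real (Suc k) \<le> 1 / Suc M" "1 / real (Suc j) \<le> 1 / Suc M"
        using k j by (auto intro!: divide_left_mono)
      then show "dist (LL k) (LL j) < e" using dist[of k j] \<open>2 / Suc M < e\<close>
        by (simp add: dist_real_def)
    qed
  qed
  then obtain L where L: "LL \<longlonglongrightarrow> L" by (auto simp: Cauchy_convergent_iff convergent_def)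
  have LLd: "\<bar>LL k - L\<bar> \<le> 1 / Suc k" for k
  proof (rule tendsto_upperbound)
    have i: "(\<lambda>j. 1 / real (Suc j)) \<longlonglongrightarrow> 0"
      using LIMSEQ_inverse_real_of_nat by (simp add: inverse_eq_divide)
    have "((\<lambda>j. \<bar>LL k - LL j\<bar> - 1 / Suc j) \<longlongrightarrow> \<bar>LL k - L\<bar> - 0) sequentially"
      by (intro tendsto_intros L i)
    then show "((\<lambda>j. \<bar>LL k - LL j\<bar> - 1 / Suc j) \<longlongrightarrow> \<bar>LL k - L\<bar>) sequentially" by simp
    show "\<forall>\<^sub>F j in sequentially. \<bar>LL k - LL j\<bar> - 1 / Suc j \<le> 1 / Suc k"
    proof (rule always_eventually, rule allI)
      fix j show "\<bar>LL k - LL j\<bar> - 1 / Suc j \<le> 1 / Suc k" using dist[of k j] by linarith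
    qed
  qed (use trivial_limit_sequentially in auto)
  show ?thesis
  proof (intro exI tendstoI)
    fix e :: real assume e: "e > 0"
    obtain k :: nat where k: "3 / e < k" using reals_Archimedean2 by blast
    have ke: "3 / Suc k < e" using k e by (simp add: field_simps)
    have "\<forall>\<^sub>F Y in at_top. dist (Q k Y) (LL k) < 1 / Suc k"
      using Qt[of k] by (rule tendstoD) simp
    with Qe[of k] show "\<forall>\<^sub>F Y in at_top. dist (m Y) L < e"
    proof eventually_elim
      case (elim Y)
      have "\<bar>m Y - L\<bar> \<le> \<bar>m Y - Q k Y\<bar> + \<bar>Q k Y - LL k\<bar> + \<bar>LL k - L\<bar>" by linarith
      also have "\<dots> < 1 / Suc k + 1 / Suc k + 1 / Suc k"
        using elim LLd[of k] by (simp add: dist_real_def)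
      also have "\<dots> = 3 / Suc k" by simp
      finally show ?case using ke by (simp add: dist_real_def)
    qed
  qed
qed


lemma unif_bound:
  fixes f :: "real \<Rightarrow> real"
  assumes cont: "continuous_on UNIV f" and Bf: "\<And>x. \<bar>f x\<bar> \<le> Bf" and e: "e > 0" and R: "R > 0"
  shows "\<exists>\<delta>>0. \<forall>u v. \<bar>f u - f v\<bar> \<le> e + (2*Bf/\<delta>^2)*(u-v)^2 + (2*Bf/R^2)*u^2"
proof -
  define S where "S = {-(R+1)..R+1}"
  have "uniformly_continuous_on S f"
    by (rule compact_uniformly_continuous) (use cont continuous_on_subset in \<open>auto simp: S_def\<close>)
  then obtain d where d: "d > 0" and dd: "\<And>x x'. x \<in> S \<Longrightarrow> x' \<in> S \<Longrightarrow> dist x' x < d \<Longrightarrow> dist (f x') (f x) < e"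
    unfolding uniformly_continuous_on_def using e by metis
  define \<delta> where "\<delta> = min d 1"
  have \<delta>: "\<delta> > 0" "\<delta> \<le> d" "\<delta> \<le> 1" using d by (auto simp: \<delta>_def)
  have Bf0: "0 \<le> Bf" using Bf[of 0] by linarith
  show ?thesis
  proof (intro exI[of _ \<delta>] conjI allI)
    show "\<delta> > 0" by (rule \<delta>)
    fix u v
    have t1: "0 \<le> (2*Bf/\<delta>^2)*(u-v)^2" and t2: "0 \<le> (2*Bf/R^2)*u^2" using Bf0 by auto
    have all: "\<bar>f u - f v\<bar> \<le> 2*Bf" using Bf[of u] Bf[of v] by linarith
    show "\<bar>f u - f v\<bar> \<le> e + (2*Bf/\<delta>^2)*(u-v)^2 + (2*Bf/R^2)*u^2"
    proof (cases "\<bar>u\<bar> \<le> R \<and> \<bar>u - v\<bar> < \<delta>")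
      case True
      then have "u \<in> S" "v \<in> S" "dist u v < d" using \<delta> by (auto simp: S_def dist_real_def)
      then have "dist (f u) (f v) < e" using dd by blast
      then show ?thesis using t1 t2 by (simp add: dist_real_def)
    next
      case False
      then show ?thesis
      proof (cases "\<bar>u\<bar> > R")
        case True
        have "R^2 \<le> u^2" using True R by (metis abs_of_pos less_imp_le power2_abs power_mono)
        then have "2*Bf \<le> (2*Bf/R^2)*u^2" using R Bf0 by (simp add: field_simps mult_left_mono)
        then show ?thesis using all t1 e by linarith
      next
        case False2: False
        then have "\<bar>u - v\<bar> \<ge> \<delta>" using False by auto
        then have "\<delta>^2 \<le> (u-v)^2" using \<delta> by (metis abs_of_pos less_imp_le power2_abs power_mono)
        then have "2*Bf \<le> (2*Bf/\<delta>^2)*(u-v)^2" using \<delta> Bf0 by (simp add: field_simps mult_left_mono)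
        then show ?thesis using all t2 e by linarith
      qed
    qed
  qed
qed

lemma B2_get:
  assumes "B2_almost_periodic \<phi>" "\<epsilon> > 0"
  shows "\<exists>p Bp. continuous_on UNIV p \<and> ES (\<lambda>y. complex_of_real (p y)) \<and> (\<forall>y. \<bar>p y\<bar> \<le> Bp) \<and>
     (\<forall>\<^sub>F Y in at_top. ennreal (1 / Y) * (\<integral>\<^sup>+ y\<in>{0..Y}. ennreal ((\<phi> y - p y)^2) \<partial>lborel) < ennreal (\<epsilon>^2))"
proof -
  obtain N a mu where im: "\<And>y. Im (trig_poly N a mu y) = 0" and
    ls: "Limsup at_top (\<lambda>Y::real. ennreal (1 / Y) *
           (\<integral>\<^sup>+ y\<in>{0..Y}. ennreal ((cmod (complex_of_real (\<phi> y) - trig_poly N a mu y))^2) \<partial>lborel))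
          < ennreal (\<epsilon>^2)"
    using assms unfolding B2_almost_periodic_def by blast
  define p where "p y = Re (trig_poly N a mu y)" for y
  have tp: "trig_poly N a mu y = complex_of_real (p y)" for y
    using im[of y] by (simp add: p_def complex_eq_iff)
  show ?thesis
  proof (intro exI conjI allI)
    show "continuous_on UNIV p" unfolding p_def trig_poly_def by (intro continuous_intros)
    show "ES (\<lambda>y. complex_of_real (p y))" using ES_trig[of N a mu] by (simp add: tp[symmetric])
    fix y
    have "\<bar>p y\<bar> \<le> cmod (trig_poly N a mu y)" unfolding p_def by (rule abs_Re_le_cmod)
    also have "\<dots> \<le> (\<Sum>n=1..N. cmod (a n * exp (\<i> * complex_of_real (mu n * y))))"
      unfolding trig_poly_def by (rule norm_sum)
    also have "\<dots> = (\<Sum>n=1..N. cmod (a n))" by (simp add: norm_mult cmod_exp_i)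
    finally show "\<bar>p y\<bar> \<le> (\<Sum>n=1..N. cmod (a n))" .
  next
    have "cmod (complex_of_real (\<phi> y) - trig_poly N a mu y) = \<bar>\<phi> y - p y\<bar>" for y
      unfolding tp by (metis norm_of_real of_real_diff)
    then show "\<forall>\<^sub>F Y in at_top. ennreal (1 / Y) * (\<integral>\<^sup>+ y\<in>{0..Y}. ennreal ((\<phi> y - p y)^2) \<partial>lborel) < ennreal (\<epsilon>^2)"
      using Limsup_lessD[OF ls] by simp
  qed
qed


lemma enn_mean_lt:
  assumes "0 < Y" "0 \<le> c" "ennreal (1/Y) * X < ennreal c"
  shows "X \<le> ennreal (Y*c)"
proof -
  have "X = ennreal Y * (ennreal (1/Y) * X)"
    using assms(1) by (simp add: mult.assoc[symmetric] ennreal_mult[symmetric] del: ennreal_mult)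
  also have "\<dots> \<le> ennreal Y * ennreal c" using assms(3) by (intro mult_left_mono) auto
  also have "\<dots> = ennreal (Y*c)" using assms by (simp add: ennreal_mult)
  finally show ?thesis .
qed

lemma set_integrable_bounded_fun:
  fixes g :: "real \<Rightarrow> real"
  assumes "g \<in> borel_measurable borel" "\<And>x. \<bar>g x\<bar> \<le> B"
  shows "set_integrable lborel {0..Y} g"
  unfolding set_integrable_def
  by (rule integrableI_bounded_set_indicator[where B=B]) (use assms in \<open>auto simp: emeasure_lborel_Icc_eq\<close>)

lemma second_moment:
  fixes \<phi> :: "real \<Rightarrow> real"
  assumes \<phi>m[measurable]: "\<phi> \<in> borel_measurable borel" and B2: "B2_almost_periodic \<phi>"
  shows "\<exists>C\<phi>>0. \<forall>\<^sub>F Y in at_top. (\<integral>\<^sup>+ y\<in>{0..Y}. ennreal ((\<phi> y)^2) \<partial>lborel) \<le> ennreal (Y * C\<phi>)"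
proof -
  obtain p1 Bp1 where p1c: "continuous_on UNIV p1" and Bp1: "\<And>y. \<bar>p1 y\<bar> \<le> Bp1"
    and ev1: "\<forall>\<^sub>F Y in at_top. ennreal (1 / Y) * (\<integral>\<^sup>+ y\<in>{0..Y}. ennreal ((\<phi> y - p1 y)^2) \<partial>lborel) < ennreal (1^2)"
    using B2_get[OF B2, of 1] by auto
  have p1m[measurable]: "p1 \<in> borel_measurable borel" by (rule borel_measurable_continuous_onI[OF p1c])
  define C\<phi> where "C\<phi> = 2 + 2 * Bp1^2"
  have C\<phi>0: "0 < C\<phi>" by (simp add: C\<phi>_def add_pos_nonneg)
  have \<phi>2: "\<forall>\<^sub>F Y in at_top. (\<integral>\<^sup>+ y\<in>{0..Y}. ennreal ((\<phi> y)^2) \<partial>lborel) \<le> ennreal (Y * C\<phi>)"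
    using ev1 eventually_gt_at_top[of "0::real"]
  proof eventually_elim
    case (elim Y)
    have a: "(\<integral>\<^sup>+ y\<in>{0..Y}. ennreal ((\<phi> y - p1 y)^2) \<partial>lborel) \<le> ennreal (Y * 1)"
      using enn_mean_lt[of Y 1] elim by simp
    have "(\<integral>\<^sup>+ y\<in>{0..Y}. ennreal ((\<phi> y)^2) \<partial>lborel) \<le>
        (\<integral>\<^sup>+ y. 2 * (ennreal ((\<phi> y - p1 y)^2) * indicator {0..Y} y) + ennreal (2 * Bp1^2) * indicator {0..Y} y \<partial>lborel)"
    proof (rule nn_integral_mono)
      fix y
      have "(\<phi> y)^2 \<le> 2 * (\<phi> y - p1 y)^2 + 2 * (p1 y)^2"
        using sum_squares_ge_zero[of "\<phi> y - 2 * p1 y" 0] by (simp add: power2_eq_square algebra_simps)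
      also have "(p1 y)^2 \<le> Bp1^2" using Bp1[of y] by (metis abs_ge_zero power2_abs power_mono)
      finally have "ennreal ((\<phi> y)^2) \<le> ennreal (2 * (\<phi> y - p1 y)^2) + ennreal (2 * Bp1^2)"
        by (simp add: ennreal_plus[symmetric] del: ennreal_plus)
      also have "ennreal (2 * (\<phi> y - p1 y)^2) = 2 * ennreal ((\<phi> y - p1 y)^2)" by (simp add: ennreal_mult)
      finally show "ennreal ((\<phi> y)^2) * indicator {0..Y} y \<le>
          2 * (ennreal ((\<phi> y - p1 y)^2) * indicator {0..Y} y) + ennreal (2 * Bp1^2) * indicator {0..Y} y"
        by (cases "y \<in> {0..Y}") auto
    qed
    also have "\<dots> = 2 * (\<integral>\<^sup>+ y\<in>{0..Y}. ennreal ((\<phi> y - p1 y)^2) \<partial>lborel) + ennreal (2 * Bp1^2) * ennreal Y"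
      using elim by (subst nn_integral_add) (auto simp: nn_integral_cmult nn_integral_cmult_indicator emeasure_lborel_Icc)
    also have "\<dots> \<le> 2 * ennreal (Y * 1) + ennreal (2 * Bp1^2) * ennreal Y"
      using a by (intro add_mono mult_left_mono) auto
    also have "\<dots> = ennreal (2*Y) + ennreal (2 * Bp1^2 * Y)"
      using elim by (simp add: ennreal_mult)
    also have "\<dots> = ennreal (Y * C\<phi>)"
      using elim by (simp add: ennreal_plus[symmetric] C\<phi>_def algebra_simps del: ennreal_plus)
    finally show ?case .
  qed
  then show ?thesis using C\<phi>0 by blast
qed

lemma mean_conv:
  fixes \<phi> f :: "real \<Rightarrow> real"
  assumes \<phi>m[measurable]: "\<phi> \<in> borel_measurable borel" and B2: "B2_almost_periodic \<phi>"
    and fc: "continuous_on UNIV f" and fb: "bounded (range f)"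
  shows "\<exists>L. ((\<lambda>Y. (1/Y) * (LINT y:{0..Y}|lborel. f (\<phi> y))) \<longlongrightarrow> L) at_top"
proof (rule approx_conv)
  obtain Bf where Bf: "\<And>x. \<bar>f x\<bar> \<le> Bf" using fb by (auto simp: bounded_iff)
  have Bf0: "0 \<le> Bf" using Bf[of 0] by linarith
  have fm[measurable]: "f \<in> borel_measurable borel" by (rule borel_measurable_continuous_onI[OF fc])
  obtain C\<phi> where C\<phi>0: "0 < C\<phi>" and \<phi>2: "\<forall>\<^sub>F Y in at_top. (\<integral>\<^sup>+ y\<in>{0..Y}. ennreal ((\<phi> y)^2) \<partial>lborel) \<le> ennreal (Y * C\<phi>)"
    using second_moment[OF \<phi>m B2] by blast
  fix \<epsilon> :: real assume \<epsilon>: "\<epsilon> > 0"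
  define R where "R = 8 * Bf * C\<phi> / \<epsilon> + 1"
  have R1: "R \<ge> 1" using Bf0 C\<phi>0 \<epsilon> by (simp add: R_def)
  define K2 where "K2 = 2 * Bf / R^2"
  have K20: "0 \<le> K2" using Bf0 by (simp add: K2_def)
  have K2C: "K2 * C\<phi> \<le> \<epsilon>/4"
  proof -
    have "K2 * C\<phi> \<le> 2 * Bf * C\<phi> / R"
    proof -
      have "R \<le> R^2" using R1 by (simp add: power2_eq_square)
      then show ?thesis unfolding K2_def using R1 Bf0 C\<phi>0
        by (simp add: divide_left_mono mult_pos_pos)
    qed
    also have "\<dots> \<le> \<epsilon>/4"
    proof -
      have "8 * Bf * C\<phi> \<le> \<epsilon> * R" using \<epsilon> by (simp add: R_def field_simps)
      then show ?thesis using R1 \<epsilon> by (simp add: field_simps)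
    qed
    finally show ?thesis .
  qed
  obtain \<delta> where \<delta>: "\<delta> > 0" and ub: "\<And>u v. \<bar>f u - f v\<bar> \<le> \<epsilon>/4 + (2*Bf/\<delta>^2)*(u-v)^2 + (2*Bf/R^2)*u^2"
    using unif_bound[OF fc Bf, of "\<epsilon>/4" R] \<epsilon> R1 by auto
  define K1 where "K1 = 2*Bf/\<delta>^2"
  have K10: "0 \<le> K1" using Bf0 by (simp add: K1_def)
  define \<epsilon>2 where "\<epsilon>2 = sqrt (\<epsilon> / (4 * (K1 + 1)))"
  have \<epsilon>20: "\<epsilon>2 > 0" using \<epsilon> K10 by (simp add: \<epsilon>2_def)
  have K1e: "K1 * \<epsilon>2^2 \<le> \<epsilon>/4"
  proof -
    have e: "\<epsilon>2^2 = \<epsilon> / (4 * (K1 + 1))" using \<epsilon> K10 by (simp add: \<epsilon>2_def)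
    have "K1 * \<epsilon>2^2 = (\<epsilon>/4) * (K1/(K1+1))" unfolding e using K10 by (simp add: field_simps)
    also have "\<dots> \<le> (\<epsilon>/4) * 1" using \<epsilon> K10 by (intro mult_left_mono) auto
    finally show ?thesis by simp
  qed
  obtain p2 Bp2 where p2c: "continuous_on UNIV p2" and p2ES: "ES (\<lambda>y. complex_of_real (p2 y))"
    and Bp2: "\<And>y. \<bar>p2 y\<bar> \<le> Bp2"
    and ev2: "\<forall>\<^sub>F Y in at_top. ennreal (1 / Y) * (\<integral>\<^sup>+ y\<in>{0..Y}. ennreal ((\<phi> y - p2 y)^2) \<partial>lborel) < ennreal (\<epsilon>2^2)"
    using B2_get[OF B2 \<epsilon>20] by auto
  have p2m[measurable]: "p2 \<in> borel_measurable borel" by (rule borel_measurable_continuous_onI[OF p2c])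
  obtain h where hp: "real_polynomial_function h" and hf: "\<And>x. x \<in> {-Bp2..Bp2} \<Longrightarrow> \<bar>f x - h x\<bar> < \<epsilon>/4"
    using Stone_Weierstrass_real_polynomial_function[of "{-Bp2..Bp2}" f "\<epsilon>/4"] fc \<epsilon>
      continuous_on_subset by (metis compact_Icc divide_pos_pos subset_UNIV zero_less_numeral)
  have hc: "continuous_on UNIV h"
    using hp by (simp add: real_polynomial_function_eq continuous_on_polymonial_function)
  have hpc: "continuous_on UNIV (\<lambda>y. h (p2 y))"
    by (rule continuous_on_compose2[OF hc p2c]) auto
  define q where "q Y = (1/Y) * integral {0..Y} (\<lambda>y. h (p2 y))" for Y
  obtain L where qL: "(q \<longlongrightarrow> L) at_top"
    using ES_real_mean[OF ES_poly[OF hp p2ES] hpc] unfolding q_def by blast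
  show "\<exists>q L. (q \<longlongrightarrow> L) at_top \<and> (\<forall>\<^sub>F Y in at_top. \<bar>(1/Y) * (LINT y:{0..Y}|lborel. f (\<phi> y)) - q Y\<bar> \<le> \<epsilon>)"
  proof (intro exI conjI)
    show "(q \<longlongrightarrow> L) at_top" by (rule qL)
    show "\<forall>\<^sub>F Y in at_top. \<bar>(1/Y) * (LINT y:{0..Y}|lborel. f (\<phi> y)) - q Y\<bar> \<le> \<epsilon>"
      using ev2 \<phi>2 eventually_ge_at_top[of "1::real"]
    proof eventually_elim
      case (elim Y)
      have Y0: "0 < Y" using elim by simp
      have a2: "(\<integral>\<^sup>+ y\<in>{0..Y}. ennreal ((\<phi> y - p2 y)^2) \<partial>lborel) \<le> ennreal (Y * \<epsilon>2^2)"
        using enn_mean_lt[of Y "\<epsilon>2^2"] elim by simp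
      have hpm[measurable]: "(\<lambda>y. h (p2 y)) \<in> borel_measurable borel"
        by (rule borel_measurable_continuous_onI[OF hpc])
      have i1: "set_integrable lborel {0..Y} (\<lambda>y. f (\<phi> y))"
        by (rule set_integrable_bounded_fun[where B=Bf]) (auto simp: Bf)
      have i2: "set_integrable lborel {0..Y} (\<lambda>y. h (p2 y))"
        by (rule borel_integrable_atLeastAtMost') (use hpc continuous_on_subset in blast)
      have qY: "q Y = (1/Y) * (LINT y:{0..Y}|lborel. h (p2 y))"
        unfolding q_def using set_borel_integral_eq_integral(2)[OF i2] by simp
      define g where "g y = f (\<phi> y) - h (p2 y)" for y
      have gm[measurable]: "g \<in> borel_measurable borel" unfolding g_def by measurable
      have diff: "(1/Y) * (LINT y:{0..Y}|lborel. f (\<phi> y)) - q Y = (1/Y) * (LINT y:{0..Y}|lborel. g y)"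
        unfolding qY g_def set_integral_diff(2)[OF i1 i2] by (simp add: algebra_simps)
      have ig: "integrable lborel (\<lambda>y. indicator {0..Y} y *\<^sub>R g y)"
        using set_integral_diff(1)[OF i1 i2] unfolding set_integrable_def g_def .
      have "ennreal \<bar>LINT y:{0..Y}|lborel. g y\<bar> \<le> (\<integral>\<^sup>+ y. ennreal (norm (indicator {0..Y} y *\<^sub>R g y)) \<partial>lborel)"
        using integral_norm_bound_ennreal[OF ig] unfolding set_lebesgue_integral_def by simp
      also have "\<dots> \<le> (\<integral>\<^sup>+ y. (ennreal (\<epsilon>/2) * indicator {0..Y} y + ennreal K1 * (ennreal ((\<phi> y - p2 y)^2) * indicator {0..Y} y))
            + ennreal K2 * (ennreal ((\<phi> y)^2) * indicator {0..Y} y) \<partial>lborel)"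
      proof (rule nn_integral_mono)
        fix y
        have "\<bar>g y\<bar> \<le> \<bar>f (\<phi> y) - f (p2 y)\<bar> + \<bar>f (p2 y) - h (p2 y)\<bar>" unfolding g_def by linarith
        also have "\<dots> \<le> (\<epsilon>/4 + K1*(\<phi> y - p2 y)^2 + K2*(\<phi> y)^2) + \<epsilon>/4"
          using ub[of "\<phi> y" "p2 y"] hf[of "p2 y"] Bp2[of y] unfolding K1_def K2_def
          by (intro add_mono) (auto simp: abs_le_iff)
        finally have gb: "\<bar>g y\<bar> \<le> \<epsilon>/2 + K1*(\<phi> y - p2 y)^2 + K2*(\<phi> y)^2" by simp
        have "ennreal \<bar>g y\<bar> \<le> ennreal (\<epsilon>/2 + K1*(\<phi> y - p2 y)^2 + K2*(\<phi> y)^2)"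
          by (rule ennreal_leI[OF gb])
        also have "\<dots> = ennreal (\<epsilon>/2) + ennreal K1 * ennreal ((\<phi> y - p2 y)^2) + ennreal K2 * ennreal ((\<phi> y)^2)"
          using \<epsilon> K10 K20 by (simp add: ennreal_plus[symmetric] ennreal_mult[symmetric] del: ennreal_plus)
        finally show "ennreal (norm (indicator {0..Y} y *\<^sub>R g y)) \<le>
            (ennreal (\<epsilon>/2) * indicator {0..Y} y + ennreal K1 * (ennreal ((\<phi> y - p2 y)^2) * indicator {0..Y} y))
            + ennreal K2 * (ennreal ((\<phi> y)^2) * indicator {0..Y} y)"
          by (cases "y \<in> {0..Y}") auto
      qed
      also have "\<dots> = ennreal (\<epsilon>/2) * ennreal Y + ennreal K1 * (\<integral>\<^sup>+ y\<in>{0..Y}. ennreal ((\<phi> y - p2 y)^2) \<partial>lborel)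
            + ennreal K2 * (\<integral>\<^sup>+ y\<in>{0..Y}. ennreal ((\<phi> y)^2) \<partial>lborel)"
        using Y0 by (simp add: nn_integral_add nn_integral_cmult nn_integral_cmult_indicator emeasure_lborel_Icc)
      also have "\<dots> \<le> ennreal (\<epsilon>/2) * ennreal Y + ennreal K1 * ennreal (Y * \<epsilon>2^2) + ennreal K2 * ennreal (Y * C\<phi>)"
        using a2 elim by (intro add_mono mult_left_mono order.refl) auto
      also have "\<dots> = ennreal (Y * (\<epsilon>/2 + K1 * \<epsilon>2^2 + K2 * C\<phi>))"
        using Y0 \<epsilon> K10 K20 C\<phi>0
        by (simp add: ennreal_mult[symmetric] ennreal_plus[symmetric] algebra_simps del: ennreal_plus)
      also have "\<dots> \<le> ennreal (Y * \<epsilon>)"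
        using K1e K2C Y0 by (intro ennreal_leI mult_left_mono) auto
      finally have "\<bar>LINT y:{0..Y}|lborel. g y\<bar> \<le> Y * \<epsilon>"
        using Y0 \<epsilon> by (simp add: ennreal_le_iff)
      then have "(1/Y) * \<bar>LINT y:{0..Y}|lborel. g y\<bar> \<le> \<epsilon>" using Y0 by (simp add: field_simps)
      then show ?case unfolding diff using Y0 by (simp add: abs_mult)
    qed
  qed
qed



lemma limdist_meas:
  fixes \<phi> :: "real \<Rightarrow> real"
  assumes \<phi>m[measurable]: "\<phi> \<in> borel_measurable borel" and B2: "B2_almost_periodic \<phi>"
  shows "has_limiting_distribution \<phi>"
proof -
  obtain C\<phi> where C\<phi>0: "0 < C\<phi>" and ev: "\<forall>\<^sub>F Y in at_top. (\<integral>\<^sup>+ y\<in>{0..Y}. ennreal ((\<phi> y)^2) \<partial>lborel) \<le> ennreal (Y * C\<phi>)"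
    using second_moment[OF \<phi>m B2] by blast
  then obtain Y2 where Y2: "\<And>Y. Y \<ge> Y2 \<Longrightarrow> (\<integral>\<^sup>+ y\<in>{0..Y}. ennreal ((\<phi> y)^2) \<partial>lborel) \<le> ennreal (Y * C\<phi>)"
    by (auto simp: eventually_at_top_linorder)
  define Y0 where "Y0 = max Y2 1"
  define Yn where "Yn n = real n + Y0" for n
  have Yn1: "Yn n \<ge> 1" for n by (simp add: Yn_def Y0_def)
  have YnC: "(\<integral>\<^sup>+ y\<in>{0..Yn n}. ennreal ((\<phi> y)^2) \<partial>lborel) \<le> ennreal (Yn n * C\<phi>)" for n
    by (rule Y2) (simp add: Yn_def Y0_def)
  define dens where "dens n y = indicator {0..Yn n} y / Yn n" for n y
  have dm[measurable]: "dens n \<in> borel_measurable borel" for n unfolding dens_def by measurable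
  define D where "D n = density lborel (\<lambda>y. ennreal (dens n y))" for n
  have Dp: "prob_space (D n)" for n
  proof (rule prob_spaceI)
    have "emeasure (D n) (space (D n)) = (\<integral>\<^sup>+ y. ennreal (dens n y) * indicator UNIV y \<partial>lborel)"
      unfolding D_def by (subst emeasure_density) auto
    also have "\<dots> = (\<integral>\<^sup>+ y. ennreal (1 / Yn n) * indicator {0..Yn n} y \<partial>lborel)"
      by (intro nn_integral_cong) (auto simp: dens_def indicator_def)
    also have "\<dots> = ennreal (1 / Yn n) * ennreal (Yn n)"
      using Yn1[of n] by (simp add: nn_integral_cmult_indicator emeasure_lborel_Icc)
    also have "\<dots> = 1" using Yn1[of n] by (simp add: ennreal_mult[symmetric] del: ennreal_mult)
    finally show "emeasure (D n) (space (D n)) = 1" .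
  qed
  have sD[simp, measurable_cong]: "sets (D n) = sets borel" for n by (simp add: D_def)
  define \<nu> where "\<nu> n = distr (D n) borel \<phi>" for n
  have rd: "real_distribution (\<nu> n)" for n
  proof -
    interpret prob_space "D n" by (rule Dp)
    have "prob_space (\<nu> n)" unfolding \<nu>_def by (rule prob_space_distr) simp
    then show ?thesis unfolding real_distribution_def real_distribution_axioms_def by (simp add: \<nu>_def)
  qed
  have int_eq: "integral\<^sup>L (\<nu> n) f = (1 / Yn n) * (LINT y:{0..Yn n}|lborel. f (\<phi> y))"
    if fm[measurable]: "f \<in> borel_measurable borel" for f n
  proof -
    have "integral\<^sup>L (\<nu> n) f = integral\<^sup>L (D n) (\<lambda>y. f (\<phi> y))"
      unfolding \<nu>_def by (rule integral_distr) simp_all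
    also have "\<dots> = integral\<^sup>L lborel (\<lambda>y. dens n y *\<^sub>R f (\<phi> y))"
      unfolding D_def by (rule integral_density) (use Yn1[of n] in \<open>auto simp: dens_def intro!: AE_I2\<close>)
    also have "\<dots> = integral\<^sup>L lborel (\<lambda>y. (1 / Yn n) * (indicator {0..Yn n} y *\<^sub>R f (\<phi> y)))"
      by (intro Bochner_Integration.integral_cong) (auto simp: dens_def)
    also have "\<dots> = (1 / Yn n) * (LINT y:{0..Yn n}|lborel. f (\<phi> y))"
      by (simp add: set_lebesgue_integral_def)
    finally show ?thesis .
  qed
  have tight: "tight \<nu>"
    unfolding tight_def
  proof (intro conjI allI impI)
    show "real_distribution (\<nu> n)" for n by (rule rd)
    fix \<epsilon> :: real assume \<epsilon>: "\<epsilon> > 0"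
    define R where "R = C\<phi> / \<epsilon> + 1"
    have R1: "R \<ge> 1" using C\<phi>0 \<epsilon> by (simp add: R_def)
    have RC: "C\<phi> / R^2 < \<epsilon>"
    proof -
      have "C\<phi> / R^2 \<le> C\<phi> / R" using R1 C\<phi>0 by (intro divide_left_mono) (auto simp: power2_eq_square)
      also have "\<dots> < \<epsilon>" using R1 \<epsilon> C\<phi>0 by (simp add: R_def field_simps)
      finally show ?thesis .
    qed
    show "\<exists>a b. a < b \<and> (\<forall>n. 1 - \<epsilon> < measure (\<nu> n) {a<..b})"
    proof (intro exI conjI allI)
      show "-R < R" using R1 by simp
      fix n
      interpret rdn: real_distribution "\<nu> n" by (rule rd)
      define A where "A = UNIV - {-R<..R}"
      have Am[measurable]: "A \<in> sets borel" by (simp add: A_def)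
      have "emeasure (\<nu> n) A = emeasure (D n) (\<phi> -` A)"
        unfolding \<nu>_def by (subst emeasure_distr) (auto simp: D_def)
      also have "\<dots> = (\<integral>\<^sup>+ y. ennreal (dens n y) * indicator (\<phi> -` A) y \<partial>lborel)"
        unfolding D_def by (rule emeasure_density) (auto simp: measurable_sets_borel[OF \<phi>m Am])
      also have "\<dots> \<le> (\<integral>\<^sup>+ y. ennreal (1 / (Yn n * R^2)) * (ennreal ((\<phi> y)^2) * indicator {0..Yn n} y) \<partial>lborel)"
      proof (rule nn_integral_mono)
        fix y
        show "ennreal (dens n y) * indicator (\<phi> -` A) y \<le> ennreal (1 / (Yn n * R^2)) * (ennreal ((\<phi> y)^2) * indicator {0..Yn n} y)"
        proof (cases "y \<in> {0..Yn n} \<and> \<phi> y \<in> A")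
          case True
          then have "R \<le> \<bar>\<phi> y\<bar>" by (auto simp: A_def)
          then have "R^2 \<le> (\<phi> y)^2" using R1 by (metis abs_of_pos less_le_trans zero_less_one power2_abs power_mono less_imp_le)
          then have "1 / Yn n \<le> 1 / (Yn n * R^2) * (\<phi> y)^2"
            using Yn1[of n] R1 by (simp add: field_simps)
          then show ?thesis using True Yn1[of n] R1
            by (simp add: dens_def ennreal_mult[symmetric] del: ennreal_mult)
        qed (auto simp: dens_def)
      qed
      also have "\<dots> = ennreal (1 / (Yn n * R^2)) * (\<integral>\<^sup>+ y\<in>{0..Yn n}. ennreal ((\<phi> y)^2) \<partial>lborel)"
        by (rule nn_integral_cmult) measurable
      also have "\<dots> \<le> ennreal (1 / (Yn n * R^2)) * ennreal (Yn n * C\<phi>)"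
        by (intro mult_left_mono YnC) simp
      also have "\<dots> = ennreal (C\<phi> / R^2)"
        using Yn1[of n] R1 C\<phi>0 by (simp add: ennreal_mult[symmetric] del: ennreal_mult)
      finally have "emeasure (\<nu> n) A \<le> ennreal (C\<phi> / R^2)" .
      then have mA: "measure (\<nu> n) A \<le> C\<phi> / R^2"
        using C\<phi>0 by (simp add: rdn.emeasure_eq_measure)
      have "measure (\<nu> n) {-R<..R} = 1 - measure (\<nu> n) A"
        using rdn.prob_compl[of "{-R<..R}"] by (simp add: A_def)
      then show "1 - \<epsilon> < measure (\<nu> n) {-R<..R}" using mA RC by linarith
    qed
  qed
  obtain r M where r: "strict_mono r" and M: "real_distribution M" and wc: "weak_conv_m (\<nu> \<circ> id \<circ> r) M"
    using tight_imp_convergent_subsubsequence[OF tight, of id] by (auto simp: strict_mono_def)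
  interpret M: real_distribution M by (rule M)
  show ?thesis
    unfolding has_limiting_distribution_def
  proof (intro exI[of _ M] conjI allI impI)
    show "prob_space M" by unfold_locales
    show "sets M = sets borel" by simp
    fix f :: "real \<Rightarrow> real"
    assume f: "continuous_on UNIV f \<and> bounded (range f)"
    have fm[measurable]: "f \<in> borel_measurable borel" using f by (intro borel_measurable_continuous_onI) auto
    obtain B where B: "\<And>x. norm (f x) \<le> B" using f by (auto simp: bounded_iff)
    obtain L where L: "((\<lambda>Y. (1/Y) * (LINT y:{0..Y}|lborel. f (\<phi> y))) \<longlongrightarrow> L) at_top"
      using mean_conv[OF \<phi>m B2] f by blast
    have lim1: "(\<lambda>n. integral\<^sup>L ((\<nu> \<circ> id \<circ> r) n) f) \<longlonglongrightarrow> integral\<^sup>L M f"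
    proof (rule weak_conv_imp_integral_bdd_continuous_conv[OF _ M wc])
      show "real_distribution ((\<nu> \<circ> id \<circ> r) n)" for n using rd by simp
      show "isCont f x" for x using f by (simp add: continuous_on_eq_continuous_at)
      show "norm (f x) \<le> B" for x by (rule B)
    qed
    have Ylim: "filterlim (\<lambda>n. Yn (r n)) at_top sequentially"
    proof (rule filterlim_at_top_mono[OF filterlim_real_sequentially])
      show "\<forall>\<^sub>F n in sequentially. real n \<le> Yn (r n)"
        using seq_suble[OF r] by (auto simp: Yn_def Y0_def intro!: always_eventually)
          (smt (verit) of_nat_le_iff)
    qed
    have lim2: "(\<lambda>n. integral\<^sup>L ((\<nu> \<circ> id \<circ> r) n) f) \<longlonglongrightarrow> L"
    proof -
      have "(\<lambda>n. (1 / Yn (r n)) * (LINT y:{0..Yn (r n)}|lborel. f (\<phi> y))) \<longlonglongrightarrow> L"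
        using filterlim_compose[OF L Ylim] by simp
      then show ?thesis by (simp add: int_eq[OF fm])
    qed
    have "L = integral\<^sup>L M f" using LIMSEQ_unique[OF lim2 lim1] .
    then show "((\<lambda>Y. (1/Y) * (LINT y:{0..Y}|lborel. f (\<phi> y))) \<longlongrightarrow> (\<integral>x. f x \<partial>M)) at_top"
      using L by simp
  qed
qed



lemma B2_cong:
  assumes "\<And>y. y \<ge> 0 \<Longrightarrow> \<phi> y = \<psi> y" "B2_almost_periodic \<phi>"
  shows "B2_almost_periodic \<psi>"
proof -
  have "(\<integral>\<^sup>+ y\<in>{0..Y}. ennreal ((cmod (complex_of_real (\<phi> y) - P y))^2) \<partial>lborel) =
        (\<integral>\<^sup>+ y\<in>{0..Y}. ennreal ((cmod (complex_of_real (\<psi> y) - P y))^2) \<partial>lborel)" for Y P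
    by (rule set_nn_integral_cong) (auto simp: assms(1))
  then show ?thesis using assms(2) unfolding B2_almost_periodic_def by simp
qed

lemma limdist_cong:
  assumes "\<And>y. y \<ge> 0 \<Longrightarrow> \<phi> y = \<psi> y" "has_limiting_distribution \<phi>"
  shows "has_limiting_distribution \<psi>"
proof -
  have "(LINT y:{0..Y}|lborel. f (\<phi> y)) = (LINT y:{0..Y}|lborel. f (\<psi> y))" for Y and f :: "real \<Rightarrow> real"
    by (rule set_lebesgue_integral_cong) (auto simp: assms(1))
  then show ?thesis using assms(2) unfolding has_limiting_distribution_def by simp
qed

theorem corollary1p3:
  fixes \<phi> :: "real \<Rightarrow> real" and y0 c X0 :: real
    and lam :: "nat \<Rightarrow> real" and r :: "nat \<Rightarrow> complex"
    and E :: "real \<Rightarrow> real \<Rightarrow> real"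
  assumes meas: "set_borel_measurable lborel {0..} \<phi>"
    and y0: "y0 \<ge> 0"
    and sqint: "set_integrable lborel {0..y0} (\<lambda>y. (\<phi> y)^2)"
    and lam_mono: "mono lam"
    and lam_pos: "\<And>n. lam n > 0"
    and lam_lim: "filterlim lam at_top sequentially"
    and X0: "X0 > 0"
    and expansion: "\<And>y X. y \<ge> y0 \<Longrightarrow> X \<ge> X0 \<Longrightarrow>
        \<phi> y = c + Re (\<Sum>n\<in>{n. lam n \<le> X}. r n * exp (\<i> * complex_of_real (lam n * y))) + E y X"
    and err: "((\<lambda>Y. ennreal (1 / Y) *
          (\<integral>\<^sup>+ y\<in>{y0..Y}. ennreal ((E y (exp Y))^2) \<partial>lborel)) \<longlongrightarrow> 0) at_top"
    and cases:
      "(\<exists>\<beta>>1/2. (\<exists>M>0. \<forall>\<^sub>F n in sequentially. cmod (r n) \<le> M * \<bar>lam n powr (-\<beta>)\<bar>) \<and>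
          (\<exists>M>0. \<forall>\<^sub>F T in at_top. real (card {n. T < lam n \<and> lam n \<le> T + 1}) \<le> M * \<bar>ln T\<bar>))
       \<or>
       (\<exists>\<theta>. 0 \<le> \<theta> \<and> \<theta> < 3 - sqrt 3 \<and>
          (\<exists>M>0. \<forall>\<^sub>F T in at_top. real (card {n. T < lam n \<and> lam n \<le> T + 1}) \<le> M * \<bar>ln T\<bar>) \<and>
          (\<exists>M>0. \<forall>\<^sub>F T in at_top.
             \<bar>\<Sum>n\<in>{n. lam n \<le> T}. (lam n)^2 * (cmod (r n))^2\<bar> \<le> M * \<bar>T powr \<theta>\<bar>))"
  shows "B2_almost_periodic \<phi> \<and> has_limiting_distribution \<phi>"
proof -
  have cnt: "\<exists>M>0. \<forall>\<^sub>F T in at_top. real (card {n. T < lam n \<and> lam n \<le> T + 1}) \<le> M * \<bar>ln T\<bar>"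
    using cases by blast
  obtain D where D0: "D \<ge> 0" and D: "\<forall>x>0. \<forall>F. finite F \<longrightarrow> (\<Sum>n\<in>F. 1/(1+(x - lam n)^2)) \<le> D*(1+ln(1+x))"
    using count_bound[OF lam_pos lam_lim cnt] by blast
  have summ: "summable (\<lambda>n. (cmod (r n))^2 * (1 + ln (1 + lam n)))"
    using cases
  proof
    assume "\<exists>\<beta>>1/2. (\<exists>M>0. \<forall>\<^sub>F n in sequentially. cmod (r n) \<le> M * \<bar>lam n powr (-\<beta>)\<bar>) \<and>
          (\<exists>M>0. \<forall>\<^sub>F T in at_top. real (card {n. T < lam n \<and> lam n \<le> T + 1}) \<le> M * \<bar>ln T\<bar>)"
    then obtain \<beta> where "\<beta> > 1/2" "\<exists>M>0. \<forall>\<^sub>F n in sequentially. cmod (r n) \<le> M * \<bar>lam n powr (-\<beta>)\<bar>"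
      by blast
    then show ?thesis using case_a_summable[OF lam_pos lam_lim cnt] by blast
  next
    assume "\<exists>\<theta>. 0 \<le> \<theta> \<and> \<theta> < 3 - sqrt 3 \<and>
          (\<exists>M>0. \<forall>\<^sub>F T in at_top. real (card {n. T < lam n \<and> lam n \<le> T + 1}) \<le> M * \<bar>ln T\<bar>) \<and>
          (\<exists>M>0. \<forall>\<^sub>F T in at_top.
             \<bar>\<Sum>n\<in>{n. lam n \<le> T}. (lam n)^2 * (cmod (r n))^2\<bar> \<le> M * \<bar>T powr \<theta>\<bar>)"
    then obtain \<theta> where th: "0 \<le> \<theta>" "\<theta> < 3 - sqrt 3" and
      h: "\<exists>M>0. \<forall>\<^sub>F T in at_top. \<bar>\<Sum>n\<in>{n. lam n \<le> T}. (lam n)^2 * (cmod (r n))^2\<bar> \<le> M * \<bar>T powr \<theta>\<bar>"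
      by blast
    have "1 < sqrt (3::real)" by simp
    then have "\<theta> < 2" using th by linarith
    then show ?thesis using case_b_summable[OF lam_pos lam_lim th(1) _ h] by blast
  qed
  have B2: "B2_almost_periodic \<phi>"
    by (rule B2_part[OF meas y0 sqint lam_pos lam_lim X0 expansion err D0 D summ])
  define \<phi>0 where "\<phi>0 y = indicator {0..} y * \<phi> y" for y
  have \<phi>0m: "\<phi>0 \<in> borel_measurable borel"
    using meas unfolding \<phi>0_def[abs_def] by (simp add: set_borel_measurable_def)
  have eq: "\<And>y. y \<ge> 0 \<Longrightarrow> \<phi> y = \<phi>0 y" by (simp add: \<phi>0_def)
  have "B2_almost_periodic \<phi>0" by (rule B2_cong[OF eq B2])
  then have "has_limiting_distribution \<phi>0" by (rule limdist_meas[OF \<phi>0m])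
  then have "has_limiting_distribution \<phi>" by (rule limdist_cong[rotated]) (simp add: eq)
  with B2 show ?thesis by blast
qed


end
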